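(* Let $\rho\in[0,1/2)$, $\beta\ge1$, positive weights $\omega_\ell$, and suppose there is a constant $c\in[0,1)$ with $$\frac{\bar p}{\bar p-\bar q}\le c\cdot\frac{2(1-2\rho)^2}{\beta-\beta^{-1}}+2(\rho-\rho^2)$$ (void if $\beta=1$), where $\bar p=\sum_\ell\omega_\ell p_\ell$, $\bar q=\sum_\ell\omega_\ell q_\ell$. Then for every instance generated by an IMLSBM in $\mathcal P_n(\rho,\{p_\ell\},\{q_\ell\},\beta)$ (i.e., deterministically for every realization), the output $\tilde{\mathbf z}^\star$ of Algorithm 1 (for any $\gamma>1$, $\varepsilon>0$) satisfies $$\mathcal L(\tilde{\mathbf z}^\star,\mathbf z^\star)\le C\cdot\frac{2+\varepsilon}{n^2(1-2\rho)^4}\cdot\frac{(\|\tau(\bar A)-\mathbb E\bar A\|+\Delta)^2}{(\bar p-\bar q)^2},$$ where $\Delta=\bar p-2\rho(1-\rho)(\bar p-\bar q)$, $\mathbb E\bar A$ is the marginal expectation (over label sampling and edges, with $\mathbf z^\star$ fixed), $\|\cdot\|$ is the spectral norm, and $C$ depends only on $c$.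
   Context: IMLSBM: global labels $\mathbf z^\star\in\{\pm1\}^n$, $\rho\in[0,1/2]$, $0<q_\ell<p_\ell<1$; individual labels $\mathbf z^{(\ell)}_i=\mathbf z^\star_i\xi_{\ell i}$, $\xi_{\ell i}$ i.i.d. with $P(\xi_{\ell i}=-1)=\rho$, $P(\xi_{\ell i}=1)=1-\rho$; given labels, symmetric zero-diagonal $A^{(\ell)}$ with independent upper entries Bern$(p_\ell)$ if $\mathbf z^{(\ell)}_i=\mathbf z^{(\ell)}_j$, else Bern$(q_\ell)$. $\mathcal P_n(\rho,\{p_\ell\},\{q_\ell\},\beta)$: models with $n/(2\beta)\le\#\{i:\mathbf z^\star_i=\pm1\}\le n\beta/2$. $\mathcal L(\hat{\mathbf z},\mathbf z)=n^{-1}\min\{d_H(\hat{\mathbf z},\mathbf z),d_H(-\hat{\mathbf z},\mathbf z)\}$. Algorithm 1 (inputs $\{A^{(\ell)}\}$, weights $\omega$, $\{p_\ell\}$, $\gamma>1$, $\varepsilon>0$): $\bar A=\sum_\ell\omega_\ell A^{(\ell)}$; $I=\{i\in[n]:\sum_j\bar A_{ij}>\gamma n\sum_\ell\omega_\ell p_\ell\}$; $\tau(\bar A)$ is $\bar A$ with all entries in rows or columns indexed by $I$ set to 0; $U\in\mathbb R^{n\times2}$ has orthonormal columns that are eigenvectors of $\tau(\bar A)$ for its two eigenvalues of largest absolute value; $(\hat Z,\hat X)$ is any pair with $\hat Z\in\{0,1\}^{n\times2}$ with each row a standard basis vector and $\hat X\in\mathbb R^{2\times 2}$ such that $\|\hat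 Z\hat X-U\|_F^2\le(1+\varepsilon)\min_{Z,X}\|ZX-U\|_F^2$; output $\tilde{\mathbf z}^\star_i=1$ if $\hat Z_{i1}=1$, else $-1$. *)

theory Defs
  imports "HOL-Probability.Probability"
begin

text \<open>Matrices of size n are functions nat => nat => real (entries with indices < n are
relevant); vectors of length n are functions nat => real.\<close>

definition mat_vec :: "nat \<Rightarrow> (nat \<Rightarrow> nat \<Rightarrow> real) \<Rightarrow> (nat \<Rightarrow> real) \<Rightarrow> nat \<Rightarrow> real" where
  "mat_vec n M x = (\<lambda>i. \<Sum>j<n. M i j * x j)"

definition vinner :: "nat \<Rightarrow> (nat \<Rightarrow> real) \<Rightarrow> (nat \<Rightarrow> real) \<Rightarrow> real" where
  "vinner n x y = (\<Sum>i<n. x i * y i)"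

definition vnorm :: "nat \<Rightarrow> (nat \<Rightarrow> real) \<Rightarrow> real" where
  "vnorm n x = sqrt (vinner n x x)"

definition spec_norm :: "nat \<Rightarrow> (nat \<Rightarrow> nat \<Rightarrow> real) \<Rightarrow> real" where
  "spec_norm n M = Sup {vnorm n (mat_vec n M x) | x. vnorm n x = 1}"

definition sym_mat :: "nat \<Rightarrow> (nat \<Rightarrow> nat \<Rightarrow> real) \<Rightarrow> bool" where
  "sym_mat n M \<longleftrightarrow> (\<forall>i<n. \<forall>j<n. M i j = M j i)"

definition adjacency :: "nat \<Rightarrow> (nat \<Rightarrow> nat \<Rightarrow> real) \<Rightarrow> bool" where
  "adjacency n M \<longleftrightarrow> sym_mat n M \<and> (\<forall>i<n. M i i = 0) \<and> (\<forall>i<n. \<forall>j<n. M i j \<in> {0, 1})"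

definition flip_pmf :: "real \<Rightarrow> int pmf" where
  "flip_pmf \<rho> = map_pmf (\<lambda>b. if b then -1 else 1) (bernoulli_pmf \<rho>)"

text \<open>Marginal distribution of the edge indicator A^(l)_ij (i /= j) with z* fixed:
  sample independent flips xi_i, xi_j, then an edge Bern(p) if the individual labels agree,
  Bern(q) otherwise.\<close>
definition edge_pmf :: "real \<Rightarrow> real \<Rightarrow> real \<Rightarrow> int \<Rightarrow> int \<Rightarrow> bool pmf" where
  "edge_pmf \<rho> p q zi zj =
     bind_pmf (pair_pmf (flip_pmf \<rho>) (flip_pmf \<rho>))
       (\<lambda>(a, b). bernoulli_pmf (if zi * a = zj * b then p else q))"

definition expected_Abar ::
  "nat \<Rightarrow> (nat \<Rightarrow> real) \<Rightarrow> (nat \<Rightarrow> real) \<Rightarrow> (nat \<Rightarrow> real) \<Rightarrow> real \<Rightarrow> (nat \<Rightarrow> int)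
     \<Rightarrow> nat \<Rightarrow> nat \<Rightarrow> real" where
  "expected_Abar L \<omega> p q \<rho> z = (\<lambda>i j.
     \<Sum>l<L. \<omega> l * (if i = j then 0 else
        measure_pmf.expectation (edge_pmf \<rho> (p l) (q l) (z i) (z j)) (\<lambda>e. if e then 1 else 0)))"

definition Abar :: "nat \<Rightarrow> (nat \<Rightarrow> real) \<Rightarrow> (nat \<Rightarrow> nat \<Rightarrow> nat \<Rightarrow> real) \<Rightarrow> nat \<Rightarrow> nat \<Rightarrow> real" where
  "Abar L \<omega> A = (\<lambda>i j. \<Sum>l<L. \<omega> l * A l i j)"

definition high_deg :: "nat \<Rightarrow> nat \<Rightarrow> (nat \<Rightarrow> real) \<Rightarrow> (nat \<Rightarrow> real) \<Rightarrow> real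
     \<Rightarrow> (nat \<Rightarrow> nat \<Rightarrow> real) \<Rightarrow> nat set" where
  "high_deg n L \<omega> p \<gamma> M = {i. i < n \<and> (\<Sum>j<n. M i j) > \<gamma> * real n * (\<Sum>l<L. \<omega> l * p l)}"

definition trim :: "nat \<Rightarrow> nat \<Rightarrow> (nat \<Rightarrow> real) \<Rightarrow> (nat \<Rightarrow> real) \<Rightarrow> real
     \<Rightarrow> (nat \<Rightarrow> nat \<Rightarrow> real) \<Rightarrow> nat \<Rightarrow> nat \<Rightarrow> real" where
  "trim n L \<omega> p \<gamma> M = (\<lambda>i j.
     if i \<in> high_deg n L \<omega> p \<gamma> M \<or> j \<in> high_deg n L \<omega> p \<gamma> M then 0 else M i j)"

text \<open>u1, u2 are orthonormal eigenvectors of M (eigenvalues lam1, lam2) for its two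
  eigenvalues of largest absolute value (counted with multiplicity): every eigenvalue of an
  eigenvector orthogonal to both has absolute value at most min(|lam1|, |lam2|).\<close>
definition top2_eigvecs :: "nat \<Rightarrow> (nat \<Rightarrow> nat \<Rightarrow> real) \<Rightarrow> (nat \<Rightarrow> real) \<Rightarrow> (nat \<Rightarrow> real) \<Rightarrow> bool" where
  "top2_eigvecs n M u1 u2 \<longleftrightarrow>
     vinner n u1 u1 = 1 \<and> vinner n u2 u2 = 1 \<and> vinner n u1 u2 = 0 \<and>
     (\<exists>lam1 lam2.
        (\<forall>i<n. mat_vec n M u1 i = lam1 * u1 i) \<and>
        (\<forall>i<n. mat_vec n M u2 i = lam2 * u2 i) \<and>
        (\<forall>v \<mu>. (\<exists>i<n. v i \<noteq> 0) \<and> (\<forall>i<n. mat_vec n M v i = \<mu> * v i) \<and>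
               vinner n v u1 = 0 \<and> vinner n v u2 = 0 \<longrightarrow> \<bar>\<mu>\<bar> \<le> \<bar>lam1\<bar> \<and> \<bar>\<mu>\<bar> \<le> \<bar>lam2\<bar>))"

text \<open>k-means objective ||Z X - U||_F^2: Z is encoded by an assignment k with k i \<in> {0,1}
  (row i of Z is the standard basis vector e_(k i + 1)), X is a 2 x 2 matrix (indices 0,1),
  and U has columns u1, u2.\<close>
definition kmeans_cost :: "nat \<Rightarrow> (nat \<Rightarrow> real) \<Rightarrow> (nat \<Rightarrow> real) \<Rightarrow> (nat \<Rightarrow> nat)
     \<Rightarrow> (nat \<Rightarrow> nat \<Rightarrow> real) \<Rightarrow> real" where
  "kmeans_cost n u1 u2 k X = (\<Sum>i<n. (X (k i) 0 - u1 i)\<^sup>2 + (X (k i) 1 - u2 i)\<^sup>2)"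

definition alg1_output :: "nat \<Rightarrow> nat \<Rightarrow> (nat \<Rightarrow> nat \<Rightarrow> nat \<Rightarrow> real) \<Rightarrow> (nat \<Rightarrow> real)
     \<Rightarrow> (nat \<Rightarrow> real) \<Rightarrow> real \<Rightarrow> real \<Rightarrow> (nat \<Rightarrow> int) \<Rightarrow> bool" where
  "alg1_output n L A \<omega> p \<gamma> \<epsilon> zt \<longleftrightarrow>
     (\<exists>u1 u2 k X.
        top2_eigvecs n (trim n L \<omega> p \<gamma> (Abar L \<omega> A)) u1 u2 \<and>
        (\<forall>i<n. k i < 2) \<and>
        (\<forall>k' X'. (\<forall>i<n. k' i < 2) \<longrightarrow>
           kmeans_cost n u1 u2 k X \<le> (1 + \<epsilon>) * kmeans_cost n u1 u2 k' X') \<and>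
        (\<forall>i<n. zt i = (if k i = 0 then 1 else -1)))"

definition hamming :: "nat \<Rightarrow> (nat \<Rightarrow> int) \<Rightarrow> (nat \<Rightarrow> int) \<Rightarrow> nat" where
  "hamming n x y = card {i. i < n \<and> x i \<noteq> y i}"

definition misclass_loss :: "nat \<Rightarrow> (nat \<Rightarrow> int) \<Rightarrow> (nat \<Rightarrow> int) \<Rightarrow> real" where
  "misclass_loss n zh z = real (min (hamming n zh z) (hamming n (\<lambda>i. - zh i) z)) / real n"

end

theory Submission
  imports Defs
begin

lemma vinner_comm: "vinner n x y = vinner n y x"
  unfolding vinner_def by (simp add: mult.commute)

lemma vinner_add_left: "vinner n (\<lambda>i. x i + y i) w = vinner n x w + vinner n y w"
  unfolding vinner_def by (simp add: algebra_simps sum.distrib)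
lemma vinner_diff_left: "vinner n (\<lambda>i. x i - y i) w = vinner n x w - vinner n y w"
  unfolding vinner_def by (simp add: algebra_simps sum_subtractf)
lemma vinner_scale_left: "vinner n (\<lambda>i. a * x i) w = a * vinner n x w"
  unfolding vinner_def by (simp add: algebra_simps sum_distrib_left)
lemma vinner_add_right: "vinner n w (\<lambda>i. x i + y i) = vinner n w x + vinner n w y"
  unfolding vinner_def by (simp add: algebra_simps sum.distrib)
lemma vinner_diff_right: "vinner n w (\<lambda>i. x i - y i) = vinner n w x - vinner n w y"
  unfolding vinner_def by (simp add: algebra_simps sum_subtractf)
lemma vinner_scale_right: "vinner n w (\<lambda>i. a * x i) = a * vinner n w x"
  unfolding vinner_def by (simp add: algebra_simps sum_distrib_left)

lemma vinner_cong: "(\<And>i. i < n \<Longrightarrow> x i = x' i) \<Longrightarrow> (\<And>i. i < n \<Longrightarrow> y i = y' i) \<Longrightarrow>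
  vinner n x y = vinner n x' y'"
  unfolding vinner_def by (intro sum.cong) auto

lemma vinner_self_nonneg: "0 \<le> vinner n x x"
  unfolding vinner_def by (intro sum_nonneg) simp

lemma vinner_self_eq0: "vinner n x x = 0 \<longleftrightarrow> (\<forall>i<n. x i = 0)"
  unfolding vinner_def by (subst sum_nonneg_eq_0_iff) auto

lemma vnorm_L2: "vnorm n x = L2_set x {..<n}"
  unfolding vnorm_def vinner_def L2_set_def by (simp add: power2_eq_square)

lemma vnorm_sq: "(vnorm n x)\<^sup>2 = vinner n x x"
  unfolding vnorm_def by (simp add: vinner_self_nonneg)

lemma vnorm_nonneg: "0 \<le> vnorm n x"
  unfolding vnorm_def by (simp add: vinner_self_nonneg)

lemma vnorm_cong: "(\<And>i. i < n \<Longrightarrow> x i = x' i) \<Longrightarrow> vnorm n x = vnorm n x'"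
  unfolding vnorm_def by (metis vinner_cong)

lemma cauchy_schwarz: "\<bar>vinner n x y\<bar> \<le> vnorm n x * vnorm n y"
proof -
  have "\<bar>vinner n x y\<bar> \<le> (\<Sum>i<n. \<bar>x i\<bar> * \<bar>y i\<bar>)"
    unfolding vinner_def by (metis (no_types, lifting) abs_mult sum.cong sum_abs)
  also have "\<dots> \<le> vnorm n x * vnorm n y" unfolding vnorm_L2 by (rule L2_set_mult_ineq)
  finally show ?thesis .
qed

lemma vnorm_triangle: "vnorm n (\<lambda>i. x i + y i) \<le> vnorm n x + vnorm n y"
  unfolding vnorm_L2 by (rule L2_set_triangle_ineq)

lemma vnorm_diff_triangle: "vnorm n (\<lambda>i. x i - y i) \<le> vnorm n x + vnorm n y"
proof -
  have "vnorm n (\<lambda>i. x i + (- y i)) \<le> vnorm n x + vnorm n (\<lambda>i. - y i)" by (rule vnorm_triangle)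
  moreover have "vnorm n (\<lambda>i. - y i) = vnorm n y" unfolding vnorm_def vinner_def by simp
  ultimately show ?thesis by simp
qed

lemma vnorm_scale: "vnorm n (\<lambda>i. a * x i) = \<bar>a\<bar> * vnorm n x"
  unfolding vnorm_def vinner_scale_left vinner_scale_right
  by (simp add: real_sqrt_mult mult.assoc[symmetric] flip: power2_eq_square)

lemma mat_vec_lin: "mat_vec n M (\<lambda>i. a * x i + b * y i) j = a * mat_vec n M x j + b * mat_vec n M y j"
  unfolding mat_vec_def by (simp add: algebra_simps sum.distrib sum_distrib_left)

lemma mat_vec_cong: "(\<And>i. i < n \<Longrightarrow> x i = x' i) \<Longrightarrow> mat_vec n M x = mat_vec n M x'"
  unfolding mat_vec_def by (intro ext sum.cong) auto

lemma mat_vec_sym: assumes "sym_mat n M"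
  shows "vinner n (mat_vec n M x) y = vinner n x (mat_vec n M y)"
proof -
  have "vinner n (mat_vec n M x) y = (\<Sum>i<n. \<Sum>j<n. M i j * x j * y i)"
    unfolding vinner_def mat_vec_def by (simp add: sum_distrib_right)
  also have "\<dots> = (\<Sum>j<n. \<Sum>i<n. M i j * x j * y i)" by (rule sum.swap)
  also have "\<dots> = (\<Sum>j<n. \<Sum>i<n. x j * (M j i * y i))"
    using assms unfolding sym_mat_def by (intro sum.cong refl) (auto simp: algebra_simps)
  also have "\<dots> = vinner n x (mat_vec n M y)"
    unfolding vinner_def mat_vec_def by (simp add: sum_distrib_left)
  finally show ?thesis .
qed

lemma mat_vec_bound: "vnorm n (mat_vec n M x) \<le> (\<Sum>i<n. L2_set (M i) {..<n}) * vnorm n x"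
proof -
  have "vnorm n (mat_vec n M x) \<le> (\<Sum>i<n. \<bar>mat_vec n M x i\<bar>)"
    unfolding vnorm_L2 by (rule L2_set_le_sum_abs)
  also have "\<dots> \<le> (\<Sum>i<n. L2_set (M i) {..<n} * vnorm n x)"
  proof (intro sum_mono)
    fix i
    have "\<bar>mat_vec n M x i\<bar> = \<bar>vinner n (M i) x\<bar>" unfolding mat_vec_def vinner_def by simp
    also have "\<dots> \<le> vnorm n (M i) * vnorm n x" by (rule cauchy_schwarz)
    finally show "\<bar>mat_vec n M x i\<bar> \<le> L2_set (M i) {..<n} * vnorm n x" by (simp add: vnorm_L2)
  qed
  also have "\<dots> = (\<Sum>i<n. L2_set (M i) {..<n}) * vnorm n x" by (simp add: sum_distrib_right)
  finally show ?thesis .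
qed

lemma spec_norm_bound: "vnorm n (mat_vec n M x) \<le> spec_norm n M * vnorm n x"
proof -
  define B where "B = (\<Sum>i<n. L2_set (M i) {..<n})"
  have bdd: "bdd_above {vnorm n (mat_vec n M x) | x. vnorm n x = 1}"
  proof (rule bdd_aboveI)
    fix y assume "y \<in> {vnorm n (mat_vec n M x) | x. vnorm n x = 1}"
    then obtain x where "y = vnorm n (mat_vec n M x)" "vnorm n x = 1" by auto
    then show "y \<le> B" using mat_vec_bound[of n M x] unfolding B_def by simp
  qed
  show ?thesis
  proof (cases "vnorm n x = 0")
    case True
    then have "\<forall>i<n. x i = 0" unfolding vnorm_def using vinner_self_eq0 by simp
    then have "mat_vec n M x = mat_vec n M (\<lambda>i. 0)" by (intro mat_vec_cong) auto
    then have "vnorm n (mat_vec n M x) = 0" by (simp add: mat_vec_def vnorm_def vinner_def)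
    then show ?thesis using True by simp
  next
    case False
    then have pos: "vnorm n x > 0" using vnorm_nonneg[of n x] by simp
    define x' where "x' = (\<lambda>i. (1 / vnorm n x) * x i)"
    have "vnorm n x' = 1" using pos unfolding x'_def vnorm_scale by simp
    then have "vnorm n (mat_vec n M x') \<le> spec_norm n M"
      unfolding spec_norm_def by (intro cSup_upper bdd) auto
    moreover have "mat_vec n M x' = (\<lambda>j. (1 / vnorm n x) * mat_vec n M x j)"
      unfolding x'_def mat_vec_def by (simp add: sum_distrib_left algebra_simps)
    moreover have "vnorm n (\<lambda>j. (1 / vnorm n x) * mat_vec n M x j) = (1 / vnorm n x) * vnorm n (mat_vec n M x)"
      using pos by (simp only: vnorm_scale) simp
    ultimately have "(1 / vnorm n x) * vnorm n (mat_vec n M x) \<le> spec_norm n M"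
      by simp
    then show ?thesis using pos by (simp add: field_simps)
  qed
qed

lemma cont_coord: "continuous_on S (\<lambda>x::nat\<Rightarrow>real. x i)"
  by (rule continuous_on_subset[OF continuous_on_product_coordinates subset_UNIV])

lemma cont_vinner: "continuous_on S (\<lambda>y::nat\<Rightarrow>real. vinner n (u y) (w y))"
  if "\<And>i. continuous_on S (\<lambda>y. u y i)" "\<And>i. continuous_on S (\<lambda>y. w y i)" for u w
  unfolding vinner_def by (intro continuous_intros that)

lemma cont_matvec: "continuous_on S (\<lambda>y::nat\<Rightarrow>real. mat_vec n T y i)"
  unfolding mat_vec_def by (intro continuous_intros cont_coord)

lemma compact_box: "compact (Pi UNIV (\<lambda>i::nat. if i < n then {-1..1::real} else {0}))"
proof -
  have "compactin (product_topology (\<lambda>i. euclidean) UNIV) (PiE UNIV (\<lambda>i::nat. if i < n then {-1..1::real} else {0}))"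
    by (subst compactin_PiE) auto
  then show ?thesis by (simp add: euclidean_product_topology PiE_UNIV_domain)
qed

lemma compact_K: "compact (Pi UNIV (\<lambda>i::nat. if i < n then {-1..1::real} else {0}) \<inter>
   {y. vinner n y y = 1 \<and> vinner n y u1 = 0 \<and> vinner n y u2 = 0})"
proof -
  have "closed {y. vinner n y y = 1 \<and> vinner n y u1 = 0 \<and> vinner n y u2 = 0}"
    by (intro closed_Collect_conj closed_Collect_eq cont_vinner cont_coord continuous_on_const)
  then show ?thesis using compact_box by blast
qed

lemma coord_sq_le: "i < n \<Longrightarrow> (y i)\<^sup>2 \<le> vinner n y y"
  unfolding vinner_def power2_eq_square by (rule member_le_sum) auto

lemma vinner_zero_left: "(\<And>i. i < n \<Longrightarrow> x i = 0) \<Longrightarrow> vinner n x y = 0"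
  unfolding vinner_def by simp

lemma quad_scale: "vinner n (\<lambda>i. a * y i) (mat_vec n T (\<lambda>i. a * y i)) = a\<^sup>2 * vinner n y (mat_vec n T y)"
proof -
  have "mat_vec n T (\<lambda>i. a * y i) = (\<lambda>j. a * mat_vec n T y j)"
    unfolding mat_vec_def by (simp add: sum_distrib_left algebra_simps)
  then show ?thesis by (simp add: vinner_scale_left vinner_scale_right power2_eq_square)
qed

lemma spectral_max:
  assumes sym: "sym_mat n T"
    and e1: "\<forall>i<n. mat_vec n T u1 i = l1 * u1 i" and e2: "\<forall>i<n. mat_vec n T u2 i = l2 * u2 i"
    and y0: "vinner n y0 u1 = 0" "vinner n y0 u2 = 0" "\<exists>i<n. y0 i \<noteq> 0"
  shows "\<exists>v \<mu>. (\<exists>i<n. v i \<noteq> 0) \<and> (\<forall>i<n. mat_vec n T v i = \<mu> * v i) \<and>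
     vinner n v u1 = 0 \<and> vinner n v u2 = 0 \<and>
     (\<forall>y. vinner n y u1 = 0 \<and> vinner n y u2 = 0 \<longrightarrow> vinner n y (mat_vec n T y) \<le> \<mu> * vinner n y y)"
proof -
  define box where "box = Pi UNIV (\<lambda>i::nat. if i < n then {-1..1::real} else {0})"
  define K where "K = box \<inter> {y. vinner n y y = 1 \<and> vinner n y u1 = 0 \<and> vinner n y u2 = 0}"
  define f where "f = (\<lambda>y. vinner n y (mat_vec n T y))"
  define tr where "tr = (\<lambda>y::nat\<Rightarrow>real. \<lambda>i. if i < n then y i else 0)"
  have tr_eq: "\<And>y i. i < n \<Longrightarrow> tr y i = y i" unfolding tr_def by simp
  have f_tr: "f (tr y) = f y" for y
  proof -
    have "mat_vec n T (tr y) = mat_vec n T y" by (rule mat_vec_cong) (rule tr_eq)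
    then show ?thesis unfolding f_def by (simp add: vinner_cong[OF tr_eq refl])
  qed
  have inK: "tr y \<in> K" if "vinner n y y = 1" "vinner n y u1 = 0" "vinner n y u2 = 0" for y
  proof -
    have "tr y \<in> box"
    proof -
      have "tr y i \<in> (if i < n then {-1..1} else {0})" for i
      proof (cases "i < n")
        case True
        then have "(y i)\<^sup>2 \<le> 1" using coord_sq_le[of i n y] that by simp
        then have "\<bar>y i\<bar> \<le> 1" by (simp add: abs_square_le_1)
        then show ?thesis using True by (simp add: tr_def abs_le_iff)
      qed (simp add: tr_def)
      then show ?thesis unfolding box_def by auto
    qed
    moreover have "vinner n (tr y) (tr y) = 1" "vinner n (tr y) u1 = 0" "vinner n (tr y) u2 = 0"
    proof -
      have "vinner n (tr y) (tr y) = vinner n y y" by (rule vinner_cong; rule tr_eq)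
      moreover have "vinner n (tr y) u1 = vinner n y u1" by (rule vinner_cong) (auto simp: tr_eq)
      moreover have "vinner n (tr y) u2 = vinner n y u2" by (rule vinner_cong) (auto simp: tr_eq)
      ultimately show "vinner n (tr y) (tr y) = 1" "vinner n (tr y) u1 = 0" "vinner n (tr y) u2 = 0"
        using that by simp_all
    qed
    ultimately show ?thesis unfolding K_def by auto
  qed
  have nv0: "vnorm n y0 > 0"
  proof -
    have "vinner n y0 y0 \<noteq> 0" using y0(3) vinner_self_eq0 by blast
    then show ?thesis unfolding vnorm_def using vinner_self_nonneg[of n y0] by simp
  qed
  have Kne: "K \<noteq> {}"
  proof -
    define y1 where "y1 = (\<lambda>i. (1 / vnorm n y0) * y0 i)"
    have "vnorm n y1 = 1" unfolding y1_def vnorm_scale using nv0 by simp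
    then have "vinner n y1 y1 = 1" using vnorm_sq[of n y1] by simp
    moreover have "vinner n y1 u1 = 0" "vinner n y1 u2 = 0" unfolding y1_def
      by (simp_all only: vinner_scale_left y0 mult_zero_right)
    ultimately show ?thesis using inK by blast
  qed
  have contf: "continuous_on K f" unfolding f_def
    by (intro cont_vinner cont_coord cont_matvec)
  have "compact K" unfolding K_def box_def by (rule compact_K)
  then obtain v where vK: "v \<in> K" and vmax: "\<And>y. y \<in> K \<Longrightarrow> f y \<le> f v"
    using continuous_attains_sup[OF _ Kne contf] by blast
  define \<mu> where "\<mu> = f v"
  have v1: "vinner n v v = 1" and vu1: "vinner n v u1 = 0" and vu2: "vinner n v u2 = 0"
    using vK unfolding K_def by auto
  have bound: "f y \<le> \<mu> * vinner n y y" if "vinner n y u1 = 0" "vinner n y u2 = 0" for y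
  proof (cases "vinner n y y = 0")
    case True
    then have "\<forall>i<n. y i = 0" using vinner_self_eq0 by blast
    then have "f y = 0" unfolding f_def by (intro vinner_zero_left) auto
    then show ?thesis using True by simp
  next
    case False
    then have pos: "vnorm n y > 0" unfolding vnorm_def using vinner_self_nonneg[of n y] by simp
    define y' where "y' = (\<lambda>i. (1 / vnorm n y) * y i)"
    have "vnorm n y' = 1" unfolding y'_def vnorm_scale using pos by simp
    then have "vinner n y' y' = 1" using vnorm_sq[of n y'] by simp
    moreover have "vinner n y' u1 = 0" "vinner n y' u2 = 0" unfolding y'_def
      by (simp_all only: vinner_scale_left that mult_zero_right)
    ultimately have "tr y' \<in> K" using inK by blast
    then have "f y' \<le> \<mu>" using vmax f_tr unfolding \<mu>_def by metis
    moreover have "f y' = (1 / vnorm n y)\<^sup>2 * f y" unfolding f_def y'_def by (rule quad_scale)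
    moreover have "(vnorm n y)\<^sup>2 = vinner n y y" by (rule vnorm_sq)
    ultimately show ?thesis using pos by (simp add: field_simps power2_eq_square)
  qed
  define h where "h = (\<lambda>i. mat_vec n T v i - \<mu> * v i)"
  have hu1: "vinner n h u1 = 0"
  proof -
    have "vinner n h u1 = vinner n (mat_vec n T v) u1 - \<mu> * vinner n v u1"
      unfolding h_def by (simp add: vinner_diff_left vinner_scale_left)
    also have "\<dots> = vinner n v (mat_vec n T u1)" using vu1 mat_vec_sym[OF sym] by simp
    also have "\<dots> = vinner n v (\<lambda>i. l1 * u1 i)" using e1 by (intro vinner_cong) auto
    also have "\<dots> = 0" by (simp add: vinner_scale_right vu1)
    finally show ?thesis .
  qed
  have hu2: "vinner n h u2 = 0"
  proof -
    have "vinner n h u2 = vinner n (mat_vec n T v) u2 - \<mu> * vinner n v u2"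
      unfolding h_def by (simp add: vinner_diff_left vinner_scale_left)
    also have "\<dots> = vinner n v (mat_vec n T u2)" using vu2 mat_vec_sym[OF sym] by simp
    also have "\<dots> = vinner n v (\<lambda>i. l2 * u2 i)" using e2 by (intro vinner_cong) auto
    also have "\<dots> = 0" by (simp add: vinner_scale_right vu2)
    finally show ?thesis .
  qed
  have hv: "vinner n h v = 0"
    unfolding h_def using v1 by (simp add: vinner_diff_left vinner_scale_left f_def \<mu>_def vinner_comm)
  have hTv: "vinner n h (mat_vec n T v) = vinner n h h"
  proof -
    have "vinner n h (mat_vec n T v) = vinner n h (\<lambda>i. h i + \<mu> * v i)"
      by (intro vinner_cong) (auto simp: h_def)
    also have "\<dots> = vinner n h h" by (simp add: vinner_add_right vinner_scale_right hv)
    finally show ?thesis .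
  qed
  have ineq: "2 * t * vinner n h h \<le> t\<^sup>2 * (\<mu> * vinner n h h - f h)" for t
  proof -
    define y where "y = (\<lambda>i. 1 * v i + t * h i)"
    have "vinner n y u1 = 0" "vinner n y u2 = 0" unfolding y_def
      by (simp_all add: vinner_add_left vinner_scale_left vu1 vu2 hu1 hu2)
    then have b: "f y \<le> \<mu> * vinner n y y" by (rule bound)
    have yy: "vinner n y y = 1 + t\<^sup>2 * vinner n h h"
      unfolding y_def by (simp add: vinner_add_left vinner_add_right vinner_scale_left vinner_scale_right
          v1 hv vinner_comm[of n v h] power2_eq_square)
    have Ty: "mat_vec n T y = (\<lambda>j. 1 * mat_vec n T v j + t * mat_vec n T h j)"
      unfolding y_def by (intro ext mat_vec_lin)
    have vTh: "vinner n v (mat_vec n T h) = vinner n h h"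
      using mat_vec_sym[OF sym, of v h] hTv vinner_comm by metis
    have fv: "vinner n v (mat_vec n T v) = \<mu>" unfolding \<mu>_def f_def ..
    have fy: "f y = \<mu> + 2 * t * vinner n h h + t\<^sup>2 * f h"
      unfolding f_def Ty unfolding y_def
      by (simp add: vinner_add_left vinner_add_right vinner_scale_left vinner_scale_right
          hTv vTh fv power2_eq_square algebra_simps)
    show ?thesis using b yy fy by (simp add: algebra_simps)
  qed
  have hh0: "vinner n h h = 0"
  proof (rule ccontr)
    assume "vinner n h h \<noteq> 0"
    then have hp: "vinner n h h > 0" using vinner_self_nonneg[of n h] by simp
    define a where "a = \<mu> * vinner n h h - f h"
    define t where "t = vinner n h h / (\<bar>a\<bar> + 1)"
    have tp: "t > 0" unfolding t_def using hp by (simp add: add_pos_nonneg)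
    have "2 * t * vinner n h h \<le> t\<^sup>2 * a" using ineq[of t] unfolding a_def .
    then have "2 * vinner n h h \<le> t * a" using tp by (simp add: power2_eq_square)
    also have "t * a \<le> t * \<bar>a\<bar>" using tp by simp
    also have "t * \<bar>a\<bar> < vinner n h h" unfolding t_def using hp
      by (simp add: field_simps add_pos_nonneg)
    finally show False using hp by simp
  qed
  have eig: "\<forall>i<n. mat_vec n T v i = \<mu> * v i"
    using hh0 vinner_self_eq0[of n h] unfolding h_def by simp
  have "\<exists>i<n. v i \<noteq> 0" using v1 vinner_self_eq0[of n v] by auto
  then show ?thesis using eig vu1 vu2 bound unfolding f_def by blast
qed

locale comm =
  fixes n :: nat and T :: "nat \<Rightarrow> nat \<Rightarrow> real" and z :: "nat \<Rightarrow> int" and s d \<eta> :: real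
  assumes symT: "sym_mat n T"
  and zpm: "\<forall>i<n. z i = 1 \<or> z i = -1"
  and n1: "real n \<le> 6 * real (card {i. i < n \<and> z i = 1})"
  and n2: "real n \<le> 6 * real (card {i. i < n \<and> z i = -1})"
  and npos: "1 \<le> n"
  and d0: "0 \<le> d" and gpos: "d < s"
  and noise: "\<And>x. vnorm n (\<lambda>i. mat_vec n T x i - mat_vec n (\<lambda>i j. if z i = z j then s else d) x i) \<le> \<eta> * vnorm n x"
begin

definition "Cp = {..<n} \<inter> {i. z i = 1}"
definition "Cm = {..<n} - {i. z i = 1}"
definition "P = (\<lambda>i j. if z i = z j then s else d)"

lemma fin_Cp: "finite Cp" and fin_Cm: "finite Cm" unfolding Cp_def Cm_def by auto

lemma card_Cp: "card Cp = card {i. i < n \<and> z i = 1}"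
  unfolding Cp_def by (intro arg_cong[where f=card]) auto

lemma card_Cm: "card Cm = card {i. i < n \<and> z i = -1}"
  unfolding Cm_def using zpm by (intro arg_cong[where f=card]) force

lemma Cp_z: "i \<in> Cp \<Longrightarrow> z i = 1" and Cm_z: "i \<in> Cm \<Longrightarrow> z i = -1"
  and Cp_lt: "i \<in> Cp \<Longrightarrow> i < n" and Cm_lt: "i \<in> Cm \<Longrightarrow> i < n"
  unfolding Cp_def Cm_def using zpm by auto

lemma split_sum: "(\<Sum>i<n. f i) = sum f Cp + sum f Cm"
proof -
  have "{..<n} \<inter> {i. z i = 1} \<union> ({..<n} - {i. z i = 1}) = {..<n}" by auto
  then show ?thesis unfolding Cp_def Cm_def
    by (metis (no_types, lifting) finite_lessThan sum.Int_Diff)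
qed

definition "n1r = real (card Cp)"
definition "n2r = real (card Cm)"

lemma n1r_ge: "real n \<le> 6 * n1r" and n2r_ge: "real n \<le> 6 * n2r"
  using n1 n2 unfolding n1r_def n2r_def card_Cp card_Cm by auto

lemma n12: "n1r + n2r = real n"
proof -
  have "(\<Sum>i<n. (1::real)) = sum (\<lambda>_. 1) Cp + sum (\<lambda>_. 1) Cm" by (rule split_sum)
  then show ?thesis unfolding n1r_def n2r_def by simp
qed

lemma n1r_pos: "n1r > 0" and n2r_pos: "n2r > 0"
  using n1r_ge n2r_ge npos by auto

lemma sum_cc: fixes f :: "nat \<Rightarrow> real" shows "(\<Sum>i<n. f i * (if z i = 1 then A else B)) = A * sum f Cp + B * sum f Cm"
proof -
  have "(\<Sum>i<n. f i * (if z i = 1 then A else B)) = (\<Sum>i\<in>Cp. f i * (if z i = 1 then A else B)) + (\<Sum>i\<in>Cm. f i * (if z i = 1 then A else B))"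
    by (rule split_sum)
  also have "(\<Sum>i\<in>Cp. f i * (if z i = 1 then A else B)) = (\<Sum>i\<in>Cp. f i * A)"
    by (rule sum.cong) (auto simp: Cp_z)
  also have "(\<Sum>i\<in>Cm. f i * (if z i = 1 then A else B)) = (\<Sum>i\<in>Cm. f i * B)"
    by (rule sum.cong) (auto simp: Cm_z)
  also have "(\<Sum>i\<in>Cp. f i * A) + (\<Sum>i\<in>Cm. f i * B) = A * sum f Cp + B * sum f Cm"
    by (simp add: sum_distrib_right mult.commute[of A] mult.commute[of B])
  finally show ?thesis .
qed

lemma vinner_cc: fixes r :: "nat \<Rightarrow> real" shows "vinner n r (\<lambda>i. if z i = 1 then A else B) = A * sum r Cp + B * sum r Cm"
  unfolding vinner_def by (rule sum_cc)

lemma vinner_cc': fixes r :: "nat \<Rightarrow> real" shows "(\<And>i. i < n \<Longrightarrow> f i = (if z i = 1 then A else B)) \<Longrightarrow>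
   vinner n r f = A * sum r Cp + B * sum r Cm"
proof -
  assume h: "\<And>i. i < n \<Longrightarrow> f i = (if z i = 1 then A else B)"
  have "vinner n r f = vinner n r (\<lambda>i. if z i = 1 then A else B)" by (rule vinner_cong) (simp_all add: h)
  then show ?thesis by (simp only: vinner_cc)
qed

lemma Pvec: "i < n \<Longrightarrow> mat_vec n P x i =
   (if z i = 1 then s * sum x Cp + d * sum x Cm else d * sum x Cp + s * sum x Cm)"
proof -
  assume i: "i < n"
  have "mat_vec n P x i = (\<Sum>j<n. x j * (if z j = 1 then (if z i = 1 then s else d) else (if z i = 1 then d else s)))"
    unfolding mat_vec_def P_def
  proof (intro sum.cong refl)
    fix j assume "j \<in> {..<n}"
    then have "z j = 1 \<or> z j = -1" "z i = 1 \<or> z i = -1" using zpm i by auto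
    then show "(if z i = z j then s else d) * x j = x j * (if z j = 1 then (if z i = 1 then s else d) else (if z i = 1 then d else s))"
      by auto
  qed
  also have "\<dots> = (if z i = 1 then s * sum x Cp + d * sum x Cm else d * sum x Cp + s * sum x Cm)"
    by (simp add: sum_cc)
  finally show ?thesis .
qed

lemma noise': "vnorm n (\<lambda>i. mat_vec n T x i - mat_vec n P x i) \<le> \<eta> * vnorm n x"
  using noise unfolding P_def .

lemma quad_noise: "vinner n x (mat_vec n T x) \<ge> vinner n x (mat_vec n P x) - \<eta> * vinner n x x"
proof -
  define R where "R = vinner n x (\<lambda>i. mat_vec n T x i - mat_vec n P x i)"
  have e1: "vinner n x (mat_vec n T x) = vinner n x (mat_vec n P x) + R"
    unfolding R_def by (simp only: vinner_diff_right) simp?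
  have e2: "\<bar>R\<bar> \<le> vnorm n x * (\<eta> * vnorm n x)"
  proof -
    have "\<bar>R\<bar> \<le> vnorm n x * vnorm n (\<lambda>i. mat_vec n T x i - mat_vec n P x i)"
      unfolding R_def by (rule cauchy_schwarz)
    also have "\<dots> \<le> vnorm n x * (\<eta> * vnorm n x)"
      by (rule mult_left_mono[OF noise' vnorm_nonneg])
    finally show ?thesis .
  qed
  have e3: "vnorm n x * (\<eta> * vnorm n x) = \<eta> * vinner n x x"
  proof -
    have "vnorm n x * vnorm n x = vinner n x x" using vnorm_sq[of n x] by (simp only: power2_eq_square)
    moreover have "vnorm n x * (\<eta> * vnorm n x) = \<eta> * (vnorm n x * vnorm n x)" by (rule mult.left_commute)
    ultimately show ?thesis by simp
  qed
  have "- R \<le> \<eta> * vinner n x x" using e2 e3 abs_le_D2[of R] by simp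
  then show ?thesis using e1 by linarith
qed

end

context comm begin

lemma sum_Cp_cc: "sum (\<lambda>i. if z i = 1 then A else B) Cp = A * n1r"
proof -
  have "sum (\<lambda>i. if z i = 1 then A else B) Cp = sum (\<lambda>i. A) Cp" by (rule sum.cong) (auto simp: Cp_z)
  then show ?thesis by (simp add: n1r_def)
qed

lemma sum_Cm_cc: "sum (\<lambda>i. if z i = 1 then A else B) Cm = B * n2r"
proof -
  have "sum (\<lambda>i. if z i = 1 then A else B) Cm = sum (\<lambda>i. B) Cm" by (rule sum.cong) (auto simp: Cm_z)
  then show ?thesis by (simp add: n2r_def)
qed

lemma weyl:
  assumes ua1: "vinner n ua ua = 1" and uab: "vinner n ua ub = 0"
    and ea: "\<forall>i<n. mat_vec n T ua i = la * ua i" and eb: "\<forall>i<n. mat_vec n T ub i = lb * ub i"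
    and top: "\<forall>v \<mu>. (\<exists>i<n. v i \<noteq> 0) \<and> (\<forall>i<n. mat_vec n T v i = \<mu> * v i) \<and>
                 vinner n v ua = 0 \<and> vinner n v ub = 0 \<longrightarrow> \<bar>\<mu>\<bar> \<le> \<bar>la\<bar>"
  shows "(s - d) * real n / 6 - \<eta> \<le> \<bar>la\<bar>"
proof -
  define a where "a = sum ub Cp"
  define b where "b = sum ub Cm"
  obtain \<alpha> \<beta> where ab0: "\<alpha> * a + \<beta> * b = 0" and nz: "\<alpha> \<noteq> 0 \<or> \<beta> \<noteq> 0"
  proof (cases "a = 0 \<and> b = 0")
    case True then show ?thesis using that[of 1 0] by simp
  next
    case False then show ?thesis using that[of b "-a"] by (auto simp: algebra_simps)
  qed
  define x where "x = (\<lambda>i. if z i = 1 then \<alpha> else \<beta>)"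
  have sxp: "sum x Cp = \<alpha> * n1r" unfolding x_def by (rule sum_Cp_cc)
  have sxm: "sum x Cm = \<beta> * n2r" unfolding x_def by (rule sum_Cm_cc)
  have xub: "vinner n x ub = 0"
  proof -
    have "vinner n ub x = \<alpha> * a + \<beta> * b" unfolding x_def a_def b_def by (rule vinner_cc)
    then show ?thesis using ab0 by (simp add: vinner_comm)
  qed
  have xx: "vinner n x x = \<alpha>\<^sup>2 * n1r + \<beta>\<^sup>2 * n2r"
  proof -
    have "vinner n x x = \<alpha> * sum x Cp + \<beta> * sum x Cm"
      by (rule vinner_cc') (simp add: x_def)
    then show ?thesis by (simp add: sxp sxm power2_eq_square)
  qed
  have xxpos: "vinner n x x > 0"
    using nz n1r_pos n2r_pos unfolding xx
    by (auto intro: add_pos_nonneg add_nonneg_pos)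
  have xPx: "vinner n x (mat_vec n P x) = \<alpha> * (s * (\<alpha> * n1r) + d * (\<beta> * n2r)) * n1r + \<beta> * (d * (\<alpha> * n1r) + s * (\<beta> * n2r)) * n2r"
  proof -
    have "vinner n x (mat_vec n P x) = (s * sum x Cp + d * sum x Cm) * sum x Cp + (d * sum x Cp + s * sum x Cm) * sum x Cm"
      by (rule vinner_cc') (simp add: Pvec)
    then show ?thesis by (simp add: sxp sxm algebra_simps)
  qed
  have lowP: "(s - d) * real n / 6 * vinner n x x \<le> vinner n x (mat_vec n P x)"
  proof -
    have id: "vinner n x (mat_vec n P x) = d * (\<alpha> * n1r + \<beta> * n2r)\<^sup>2 + (s - d) * (\<alpha>\<^sup>2 * n1r * n1r + \<beta>\<^sup>2 * n2r * n2r)"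
      unfolding xPx by (simp add: power2_eq_square algebra_simps)
    have h1: "\<alpha>\<^sup>2 * n1r * (real n / 6) \<le> \<alpha>\<^sup>2 * n1r * n1r"
      using n1r_ge n1r_pos by (intro mult_left_mono) auto
    have h2: "\<beta>\<^sup>2 * n2r * (real n / 6) \<le> \<beta>\<^sup>2 * n2r * n2r"
      using n2r_ge n2r_pos by (intro mult_left_mono) auto
    have "(s - d) * ((\<alpha>\<^sup>2 * n1r + \<beta>\<^sup>2 * n2r) * (real n / 6)) \<le> (s - d) * (\<alpha>\<^sup>2 * n1r * n1r + \<beta>\<^sup>2 * n2r * n2r)"
      using h1 h2 gpos by (intro mult_left_mono) (auto simp: algebra_simps)
    moreover have "0 \<le> d * (\<alpha> * n1r + \<beta> * n2r)\<^sup>2" using d0 by simp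
    ultimately show ?thesis unfolding id xx by (simp add: algebra_simps)
  qed
  have lowT: "((s - d) * real n / 6 - \<eta>) * vinner n x x \<le> vinner n x (mat_vec n T x)"
    using lowP quad_noise[of x] by (simp add: algebra_simps)
  define a' where "a' = vinner n x ua"
  define y where "y = (\<lambda>i. x i - a' * ua i)"
  have yua: "vinner n y ua = 0" unfolding y_def
    by (simp add: vinner_diff_left vinner_scale_left ua1 a'_def)
  have yub: "vinner n y ub = 0" unfolding y_def
    by (simp add: vinner_diff_left vinner_scale_left uab xub)
  have xeq: "x = (\<lambda>i. a' * ua i + 1 * y i)" unfolding y_def by auto
  have Tx: "mat_vec n T x = (\<lambda>j. a' * mat_vec n T ua j + 1 * mat_vec n T y j)"
    by (subst xeq) (intro ext mat_vec_lin)
  have uTu: "vinner n ua (mat_vec n T ua) = la"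
  proof -
    have "vinner n ua (mat_vec n T ua) = vinner n ua (\<lambda>i. la * ua i)" by (rule vinner_cong) (simp_all add: ea)
    then show ?thesis by (simp add: vinner_scale_right ua1)
  qed
  have yTu: "vinner n y (mat_vec n T ua) = 0"
  proof -
    have "vinner n y (mat_vec n T ua) = vinner n y (\<lambda>i. la * ua i)" by (rule vinner_cong) (simp_all add: ea)
    then show ?thesis by (simp add: vinner_scale_right yua)
  qed
  have uTy: "vinner n ua (mat_vec n T y) = 0"
    using mat_vec_sym[OF symT, of ua y] yTu mat_vec_sym[OF symT, of y ua]
    by (metis (no_types) vinner_comm)
  have xTx: "vinner n x (mat_vec n T x) = a'\<^sup>2 * la + vinner n y (mat_vec n T y)"
  proof -
    have "vinner n x (mat_vec n T x) = vinner n (\<lambda>i. a' * ua i + 1 * y i) (\<lambda>j. a' * mat_vec n T ua j + 1 * mat_vec n T y j)"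
      by (subst Tx) (subst xeq, rule refl)
    also have "\<dots> = a'\<^sup>2 * la + vinner n y (mat_vec n T y)"
      by (simp add: vinner_add_left vinner_add_right vinner_scale_left vinner_scale_right uTu yTu uTy power2_eq_square)
    finally show ?thesis .
  qed
  have xx2: "vinner n x x = a'\<^sup>2 + vinner n y y"
  proof -
    have "vinner n x x = vinner n (\<lambda>i. a' * ua i + 1 * y i) (\<lambda>i. a' * ua i + 1 * y i)"
      by (simp only: xeq[symmetric])
    also have "\<dots> = a'\<^sup>2 + vinner n y y"
      by (simp add: vinner_add_left vinner_add_right vinner_scale_left vinner_scale_right ua1 yua
          vinner_comm[of n ua y] power2_eq_square)
    finally show ?thesis .
  qed
  have yTy: "vinner n y (mat_vec n T y) \<le> \<bar>la\<bar> * vinner n y y"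
  proof (cases "\<exists>i<n. y i \<noteq> 0")
    case False
    then have "vinner n y (mat_vec n T y) = 0" by (intro vinner_zero_left) auto
    then show ?thesis using vinner_self_nonneg[of n y] by simp
  next
    case True
    obtain v \<mu> where v: "\<exists>i<n. v i \<noteq> 0" "\<forall>i<n. mat_vec n T v i = \<mu> * v i" "vinner n v ua = 0" "vinner n v ub = 0"
      and bnd: "\<forall>y. vinner n y ua = 0 \<and> vinner n y ub = 0 \<longrightarrow> vinner n y (mat_vec n T y) \<le> \<mu> * vinner n y y"
      using spectral_max[OF symT ea eb yua yub True] by blast
    have "\<bar>\<mu>\<bar> \<le> \<bar>la\<bar>" using top v by blast
    moreover have "vinner n y (mat_vec n T y) \<le> \<mu> * vinner n y y" using bnd yua yub by blast
    moreover have "\<mu> * vinner n y y \<le> \<bar>\<mu>\<bar> * vinner n y y"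
      using vinner_self_nonneg[of n y] by (intro mult_right_mono) auto
    moreover have "\<bar>\<mu>\<bar> * vinner n y y \<le> \<bar>la\<bar> * vinner n y y"
      using vinner_self_nonneg[of n y] calculation(1) by (intro mult_right_mono) auto
    ultimately show ?thesis by linarith
  qed
  have "a'\<^sup>2 * la \<le> a'\<^sup>2 * \<bar>la\<bar>" by (intro mult_left_mono) auto
  then have "vinner n x (mat_vec n T x) \<le> \<bar>la\<bar> * vinner n x x"
    using xTx yTy xx2 by (simp add: algebra_simps)
  then have "((s - d) * real n / 6 - \<eta>) * vinner n x x \<le> \<bar>la\<bar> * vinner n x x"
    using lowT by linarith
  then show ?thesis using xxpos by simp
qed

end

context comm begin

definition "cmean u = (\<lambda>i. if z i = 1 then sum u Cp / n1r else sum u Cm / n2r)"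

lemma cmean_sums: "sum (\<lambda>i. u i - cmean u i) Cp = 0" "sum (\<lambda>i. u i - cmean u i) Cm = 0"
proof -
  have "sum (cmean u) Cp = sum u Cp" unfolding cmean_def sum_Cp_cc using n1r_pos by simp
  then show "sum (\<lambda>i. u i - cmean u i) Cp = 0" by (simp add: sum_subtractf)
  have "sum (cmean u) Cm = sum u Cm" unfolding cmean_def sum_Cm_cc using n2r_pos by simp
  then show "sum (\<lambda>i. u i - cmean u i) Cm = 0" by (simp add: sum_subtractf)
qed

lemma resid:
  assumes ua1: "vinner n ua ua = 1" and ea: "\<forall>i<n. mat_vec n T ua i = la * ua i"
  shows "\<bar>la\<bar> * vinner n (\<lambda>i. ua i - cmean ua i) (\<lambda>i. ua i - cmean ua i) \<le> \<eta> * vnorm n (\<lambda>i. ua i - cmean ua i)"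
proof -
  define r where "r = (\<lambda>i. ua i - cmean ua i)"
  have rp: "sum r Cp = 0" and rm: "sum r Cm = 0" unfolding r_def by (rule cmean_sums)+
  have rw: "vinner n r (cmean ua) = 0" unfolding cmean_def vinner_cc rp rm by simp
  have "ua = (\<lambda>i. r i + cmean ua i)" unfolding r_def by auto
  then have rua: "vinner n r ua = vinner n r r"
    using rw by (metis vinner_add_right add.right_neutral)
  have rPu: "vinner n r (mat_vec n P ua) = 0"
  proof -
    have "vinner n r (mat_vec n P ua) = (s * sum ua Cp + d * sum ua Cm) * sum r Cp + (d * sum ua Cp + s * sum ua Cm) * sum r Cm"
      by (rule vinner_cc') (simp add: Pvec)
    then show ?thesis using rp rm by simp
  qed
  have rTu: "vinner n r (mat_vec n T ua) = la * vinner n r r"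
  proof -
    have "vinner n r (mat_vec n T ua) = vinner n r (\<lambda>i. la * ua i)" by (rule vinner_cong) (simp_all add: ea)
    then show ?thesis by (simp add: vinner_scale_right rua)
  qed
  have split: "vinner n r (mat_vec n T ua) = vinner n r (mat_vec n P ua) + vinner n r (\<lambda>i. mat_vec n T ua i - mat_vec n P ua i)"
    by (simp only: vinner_diff_right) simp?
  have "\<bar>vinner n r (\<lambda>i. mat_vec n T ua i - mat_vec n P ua i)\<bar> \<le> vnorm n r * vnorm n (\<lambda>i. mat_vec n T ua i - mat_vec n P ua i)"
    by (rule cauchy_schwarz)
  also have "\<dots> \<le> vnorm n r * (\<eta> * vnorm n ua)"
    by (rule mult_left_mono[OF noise' vnorm_nonneg])
  also have "vnorm n ua = 1" unfolding vnorm_def ua1 by simp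
  finally have "\<bar>la * vinner n r r\<bar> \<le> \<eta> * vnorm n r" using split rPu rTu by (simp add: mult.commute)
  then show ?thesis unfolding r_def[symmetric] using vinner_self_nonneg[of n r] by (simp add: abs_mult)
qed

end

lemma unit_perp: "\<exists>e1 e2::real. e1\<^sup>2 + e2\<^sup>2 = 1 \<and> e1 * b1 + e2 * b2 = 0"
proof (cases "b1 = 0 \<and> b2 = 0")
  case True then show ?thesis by (intro exI[of _ 1] exI[of _ 0]) simp
next
  case False
  define t where "t = sqrt (b1\<^sup>2 + b2\<^sup>2)"
  have pos: "b1\<^sup>2 + b2\<^sup>2 > 0" using False by (simp add: add_pos_nonneg add_nonneg_pos sum_power2_gt_zero_iff)
  then have t2: "t\<^sup>2 = b1\<^sup>2 + b2\<^sup>2" and tp: "t > 0" unfolding t_def by auto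
  have h1: "(- b2 / t)\<^sup>2 + (b1 / t)\<^sup>2 = (b1\<^sup>2 + b2\<^sup>2) / t\<^sup>2" by (simp add: power_divide add_divide_distrib)
  then have h1': "(- b2 / t)\<^sup>2 + (b1 / t)\<^sup>2 = 1" using t2 pos False by simp
  have h2: "(- b2 / t) * b1 + (b1 / t) * b2 = 0" by (simp add: field_simps)
  show ?thesis using h1' h2 by blast
qed

lemma cs2: "(e1 * a + e2 * b)\<^sup>2 \<le> (e1\<^sup>2 + e2\<^sup>2) * (a\<^sup>2 + b\<^sup>2)" for e1 e2 a b :: real
proof -
  have "(e1\<^sup>2 + e2\<^sup>2) * (a\<^sup>2 + b\<^sup>2) - (e1 * a + e2 * b)\<^sup>2 = (e1 * b - e2 * a)\<^sup>2"
    by (simp add: power2_eq_square algebra_simps)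
  then show ?thesis by (metis diff_ge_0_iff_ge zero_le_power2)
qed

context comm begin

lemma separation:
  assumes u11: "vinner n u1 u1 = 1" and u22: "vinner n u2 u2 = 1" and u12: "vinner n u1 u2 = 0"
    and small: "vnorm n (\<lambda>i. u1 i - cmean u1 i) + vnorm n (\<lambda>i. u2 i - cmean u2 i) \<le> 2/5"
  shows "9/25 \<le> n1r * ((sum u1 Cp / n1r - sum u1 Cm / n2r)\<^sup>2 + (sum u2 Cp / n1r - sum u2 Cm / n2r)\<^sup>2)"
proof -
  define A1 where "A1 = sum u1 Cp / n1r"
  define A2 where "A2 = sum u2 Cp / n1r"
  define B1 where "B1 = sum u1 Cm / n2r"
  define B2 where "B2 = sum u2 Cm / n2r"
  define r1 where "r1 = (\<lambda>i. u1 i - cmean u1 i)"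
  define r2 where "r2 = (\<lambda>i. u2 i - cmean u2 i)"
  obtain e1 e2 where e: "e1\<^sup>2 + e2\<^sup>2 = 1" "e1 * B1 + e2 * B2 = 0" using unit_perp by blast
  have e1le: "\<bar>e1\<bar> \<le> 1" using e(1) by (metis abs_square_le_1 le_add_same_cancel1 zero_le_power2)
  have e2le: "\<bar>e2\<bar> \<le> 1" using e(1) by (metis abs_square_le_1 le_add_same_cancel2 zero_le_power2)
  define x where "x = (\<lambda>i. e1 * u1 i + e2 * u2 i)"
  have "vinner n x x = e1\<^sup>2 + e2\<^sup>2"
    unfolding x_def by (simp add: vinner_add_left vinner_add_right vinner_scale_left vinner_scale_right
        u11 u22 u12 vinner_comm[of n u2 u1] power2_eq_square)
  then have nx: "vnorm n x = 1" unfolding vnorm_def e(1) by simp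
  define c' where "c' = e1 * A1 + e2 * A2"
  define q where "q = (\<lambda>i. e1 * cmean u1 i + e2 * cmean u2 i)"
  define \<rho> where "\<rho> = (\<lambda>i. e1 * r1 i + e2 * r2 i)"
  have xq: "x = (\<lambda>i. q i + \<rho> i)" unfolding x_def q_def \<rho>_def r1_def r2_def by (auto simp: algebra_simps)
  have qcc: "q = (\<lambda>i. if z i = 1 then c' else 0)"
    unfolding q_def cmean_def c'_def A1_def A2_def using e(2) unfolding B1_def B2_def by auto
  have "vnorm n \<rho> \<le> vnorm n (\<lambda>i. e1 * r1 i) + vnorm n (\<lambda>i. e2 * r2 i)" unfolding \<rho>_def by (rule vnorm_triangle)
  also have "\<dots> = \<bar>e1\<bar> * vnorm n r1 + \<bar>e2\<bar> * vnorm n r2" by (simp add: vnorm_scale)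
  also have "\<dots> \<le> vnorm n r1 + vnorm n r2"
    using e1le e2le vnorm_nonneg[of n r1] vnorm_nonneg[of n r2]
    by (intro add_mono) (auto intro: mult_left_le_one_le)
  finally have rho: "vnorm n \<rho> \<le> 2/5" using small unfolding r1_def r2_def by linarith
  have "1 \<le> vnorm n q + vnorm n \<rho>" using vnorm_triangle[of n q \<rho>] nx xq by simp
  then have q35: "3/5 \<le> vnorm n q" using rho by linarith
  have "vinner n q q = c' * sum q Cp + 0 * sum q Cm" unfolding qcc by (rule vinner_cc)
  also have "sum q Cp = c' * n1r" unfolding qcc by (rule sum_Cp_cc)
  finally have qq: "vinner n q q = c'\<^sup>2 * n1r" by (simp add: power2_eq_square)
  have "(3/5)\<^sup>2 \<le> (vnorm n q)\<^sup>2" using q35 by (intro power_mono) auto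
  then have "9/25 \<le> c'\<^sup>2 * n1r" using vnorm_sq[of n q] qq by (simp add: power2_eq_square)
  moreover have "c' = e1 * (A1 - B1) + e2 * (A2 - B2)" unfolding c'_def using e(2) by (simp add: algebra_simps)
  then have "c'\<^sup>2 \<le> (A1 - B1)\<^sup>2 + (A2 - B2)\<^sup>2" using cs2[of e1 "A1 - B1" e2 "A2 - B2"] e(1) by simp
  then have "c'\<^sup>2 * n1r \<le> ((A1 - B1)\<^sup>2 + (A2 - B2)\<^sup>2) * n1r" using n1r_pos by (intro mult_right_mono) auto
  ultimately show ?thesis unfolding A1_def A2_def B1_def B2_def by (simp add: mult.commute)
qed

end

lemma sq_tri: "(a - b)\<^sup>2 \<le> 2 * (v - a)\<^sup>2 + 2 * (v - b)\<^sup>2" for a b v :: real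
proof -
  have "2 * (v - a)\<^sup>2 + 2 * (v - b)\<^sup>2 - (a - b)\<^sup>2 = (2 * v - a - b)\<^sup>2"
    by (simp add: power2_eq_square algebra_simps)
  then show ?thesis by (metis diff_ge_0_iff_ge zero_le_power2)
qed

context comm begin

lemma counting:
  fixes k :: "nat \<Rightarrow> nat" and X :: "nat \<Rightarrow> nat \<Rightarrow> real" and zt :: "nat \<Rightarrow> int"
  assumes k2: "\<forall>i<n. k i < 2"
    and ztdef: "\<forall>i<n. zt i = (if k i = 0 then 1 else -1)"
    and Dpos: "(A1 - B1)\<^sup>2 + (A2 - B2)\<^sup>2 > 0"
    and tot: "(\<Sum>i<n. (X (k i) 0 - (if z i = 1 then A1 else B1))\<^sup>2 + (X (k i) 1 - (if z i = 1 then A2 else B2))\<^sup>2) \<le> S"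
  shows "real (min (hamming n zt z) (hamming n (\<lambda>i. - zt i) z)) \<le> 3 * (4 * S / ((A1 - B1)\<^sup>2 + (A2 - B2)\<^sup>2))"
proof -
  define D2 where "D2 = (A1 - B1)\<^sup>2 + (A2 - B2)\<^sup>2"
  define e where "e = (\<lambda>i. (X (k i) 0 - (if z i = 1 then A1 else B1))\<^sup>2 + (X (k i) 1 - (if z i = 1 then A2 else B2))\<^sup>2)"
  define Bd where "Bd = {i. i < n \<and> D2 / 4 \<le> e i}"
  have Bsub: "Bd \<subseteq> {..<n}" unfolding Bd_def by auto
  have finB: "finite Bd" using Bsub finite_subset by blast
  have e0: "\<And>i. 0 \<le> e i" unfolding e_def by simp
  have "real (card Bd) * (D2 / 4) = (\<Sum>i\<in>Bd. D2 / 4)" by simp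
  also have "\<dots> \<le> (\<Sum>i\<in>Bd. e i)" by (rule sum_mono) (simp add: Bd_def)
  also have "\<dots> \<le> (\<Sum>i<n. e i)" using Bsub e0 by (intro sum_mono2) auto
  also have "\<dots> \<le> S" using tot unfolding e_def .
  finally have cB: "real (card Bd) \<le> 4 * S / D2" using Dpos unfolding D2_def[symmetric]
    by (simp add: field_simps)
  have sep: "k i \<noteq> k j" if "i < n" "j < n" "i \<notin> Bd" "j \<notin> Bd" "z i = 1" "z j \<noteq> 1" for i j
  proof
    assume kk: "k i = k j"
    have ei: "e i < D2 / 4" and ej: "e j < D2 / 4" using that unfolding Bd_def by auto
    have "(A1 - B1)\<^sup>2 \<le> 2 * (X (k i) 0 - A1)\<^sup>2 + 2 * (X (k i) 0 - B1)\<^sup>2" by (rule sq_tri)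
    moreover have "(A2 - B2)\<^sup>2 \<le> 2 * (X (k i) 1 - A2)\<^sup>2 + 2 * (X (k i) 1 - B2)\<^sup>2" by (rule sq_tri)
    moreover have "e i = (X (k i) 0 - A1)\<^sup>2 + (X (k i) 1 - A2)\<^sup>2" unfolding e_def using that by simp
    moreover have "e j = (X (k i) 0 - B1)\<^sup>2 + (X (k i) 1 - B2)\<^sup>2" unfolding e_def using that kk by simp
    ultimately have "D2 \<le> 2 * e i + 2 * e j" unfolding D2_def by linarith
    then show False using ei ej by linarith
  qed
  define H1 where "H1 = {i. i < n \<and> zt i \<noteq> z i}"
  define H2 where "H2 = {i. i < n \<and> - zt i \<noteq> z i}"
  have ztpm: "\<And>i. i < n \<Longrightarrow> zt i = 1 \<or> zt i = -1" using ztdef by auto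
  have "H1 \<union> H2 = {..<n}" unfolding H1_def H2_def using zpm ztpm by force
  moreover have "H1 \<inter> H2 = {}" unfolding H1_def H2_def using zpm ztpm by force
  moreover have "finite H1" "finite H2" unfolding H1_def H2_def by auto
  ultimately have Hsum: "card H1 + card H2 = n"
    using card_Un_disjoint[of H1 H2] by simp
  have ham: "hamming n zt z = card H1" "hamming n (\<lambda>i. - zt i) z = card H2"
    unfolding hamming_def H1_def H2_def by simp_all
  have "real (min (card H1) (card H2)) \<le> 3 * real (card Bd)"
  proof (cases "\<exists>i j. i < n \<and> j < n \<and> i \<notin> Bd \<and> j \<notin> Bd \<and> z i = 1 \<and> z j \<noteq> 1")
    case True
    then obtain i j where ij: "i < n" "j < n" "i \<notin> Bd" "j \<notin> Bd" "z i = 1" "z j \<noteq> 1" by blast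
    have kij: "k i \<noteq> k j" using sep[OF ij] .
    have good: "(k l = k i) \<longleftrightarrow> z l = 1" if "l < n" "l \<notin> Bd" for l
    proof
      assume "k l = k i"
      then show "z l = 1" using sep[of i l] ij that by auto
    next
      assume "z l = 1"
      then have "k l \<noteq> k j" using sep[of l j] ij that by auto
      moreover have "k l < 2" "k i < 2" "k j < 2" using k2 ij that by auto
      ultimately show "k l = k i" using kij by arith
    qed
    show ?thesis
    proof (cases "k i = 0")
      case True
      have "H1 \<subseteq> Bd"
      proof
        fix l assume "l \<in> H1"
        then have l: "l < n" "zt l \<noteq> z l" unfolding H1_def by auto
        show "l \<in> Bd"
        proof (rule ccontr)
          assume "l \<notin> Bd"
          then have "(k l = 0) \<longleftrightarrow> z l = 1" using good[OF l(1)] True by simp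
          then show False using l ztdef zpm by auto
        qed
      qed
      then have "card H1 \<le> card Bd" using finB by (rule card_mono[rotated])
      then show ?thesis by linarith
    next
      case False
      have "H2 \<subseteq> Bd"
      proof
        fix l assume "l \<in> H2"
        then have l: "l < n" "- zt l \<noteq> z l" unfolding H2_def by auto
        show "l \<in> Bd"
        proof (rule ccontr)
          assume "l \<notin> Bd"
          then have "(k l = k i) \<longleftrightarrow> z l = 1" using good[OF l(1)] by simp
          moreover have "k i < 2" using k2 ij by auto
          then have "k i = 1" using False by arith
          moreover have "k l < 2" using k2 l by auto
          moreover have "z l = 1 \<or> z l = -1" using zpm l by auto
          moreover have "zt l = (if k l = 0 then 1 else -1)" using ztdef l by auto
          ultimately show False using l(2) by auto
        qed
      qed
      then have "card H2 \<le> card Bd" using finB by (rule card_mono[rotated])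
      then show ?thesis by linarith
    qed
  next
    case False
    then have "Cp \<subseteq> Bd \<or> Cm \<subseteq> Bd" unfolding Cp_def Cm_def by blast
    then have "n1r \<le> real (card Bd) \<or> n2r \<le> real (card Bd)"
      unfolding n1r_def n2r_def using card_mono[OF finB, of Cp] card_mono[OF finB, of Cm] by auto
    then have "real n \<le> 6 * real (card Bd)" using n1r_ge n2r_ge by linarith
    moreover have "real (min (card H1) (card H2)) * 2 \<le> real n" using Hsum by linarith
    ultimately show ?thesis by linarith
  qed
  then show ?thesis unfolding ham D2_def[symmetric] using cB by linarith
qed

end

lemma loss_half:
  assumes "\<forall>i<n. z i = 1 \<or> z i = -1" "\<forall>i<n. zt i = 1 \<or> zt i = (-1::int)"
  shows "misclass_loss n zt z \<le> 1/2"
proof -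
  define H1 where "H1 = {i. i < n \<and> zt i \<noteq> z i}"
  define H2 where "H2 = {i. i < n \<and> - zt i \<noteq> z i}"
  have "H1 \<union> H2 = {..<n}" unfolding H1_def H2_def using assms by force
  moreover have "H1 \<inter> H2 = {}" unfolding H1_def H2_def using assms by force
  moreover have "finite H1" "finite H2" unfolding H1_def H2_def by auto
  ultimately have Hsum: "card H1 + card H2 = n"
    using card_Un_disjoint[of H1 H2] by simp
  have ham: "hamming n zt z = card H1" "hamming n (\<lambda>i. - zt i) z = card H2"
    unfolding hamming_def H1_def H2_def by simp_all
  have "real (min (card H1) (card H2)) * 2 \<le> real n" using Hsum by linarith
  then show ?thesis unfolding misclass_loss_def ham
    by (cases "n = 0") (simp_all add: field_simps)
qed

context comm begin

lemma eta_nonneg: "0 \<le> \<eta>"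
proof -
  have "vnorm n (\<lambda>i. 1) > 0"
  proof -
    have "vinner n (\<lambda>i. 1) (\<lambda>i. 1) = real n" unfolding vinner_def by simp
    then show ?thesis unfolding vnorm_def using npos by simp
  qed
  moreover have "0 \<le> \<eta> * vnorm n (\<lambda>i. 1)" using noise[of "\<lambda>i. 1"] vnorm_nonneg order_trans by blast
  ultimately show ?thesis by (simp add: zero_le_mult_iff)
qed

lemma resid_bound:
  assumes ua1: "vinner n ua ua = 1" and ea: "\<forall>i<n. mat_vec n T ua i = la * ua i"
    and lb: "(s - d) * real n / 8 \<le> \<bar>la\<bar>"
  shows "vnorm n (\<lambda>i. ua i - cmean ua i) \<le> 8 * (\<eta> / ((s - d) * real n))"
proof -
  define r where "r = (\<lambda>i. ua i - cmean ua i)"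
  have gn: "(s - d) * real n > 0" using gpos npos by simp
  have la0: "\<bar>la\<bar> > 0" using lb gn by linarith
  have h: "\<bar>la\<bar> * vinner n r r \<le> \<eta> * vnorm n r" unfolding r_def by (rule resid[OF ua1 ea])
  have "\<bar>la\<bar> * vnorm n r \<le> \<eta>"
  proof (cases "vnorm n r = 0")
    case True then show ?thesis using eta_nonneg la0 by simp
  next
    case False
    then have p: "vnorm n r > 0" using vnorm_nonneg[of n r] by simp
    have "\<bar>la\<bar> * vnorm n r * vnorm n r \<le> \<eta> * vnorm n r"
      using h vnorm_sq[of n r] by (simp add: power2_eq_square mult.assoc)
    then show ?thesis using p by simp
  qed
  then have "vnorm n r \<le> \<eta> / \<bar>la\<bar>" using la0 by (simp add: field_simps)
  also have "\<eta> / \<bar>la\<bar> \<le> \<eta> / ((s - d) * real n / 8)"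
    using lb gn eta_nonneg by (intro divide_left_mono) auto
  also have "\<dots> = 8 * (\<eta> / ((s - d) * real n))" by simp
  finally show ?thesis unfolding r_def .
qed

end

context comm begin

lemma core:
  fixes k :: "nat \<Rightarrow> nat" and X :: "nat \<Rightarrow> nat \<Rightarrow> real" and zt :: "nat \<Rightarrow> int"
  assumes u11: "vinner n u1 u1 = 1" and u22: "vinner n u2 u2 = 1" and u12: "vinner n u1 u2 = 0"
    and e1: "\<forall>i<n. mat_vec n T u1 i = l1 * u1 i" and e2: "\<forall>i<n. mat_vec n T u2 i = l2 * u2 i"
    and top: "\<forall>v \<mu>. (\<exists>i<n. v i \<noteq> 0) \<and> (\<forall>i<n. mat_vec n T v i = \<mu> * v i) \<and>
               vinner n v u1 = 0 \<and> vinner n v u2 = 0 \<longrightarrow> \<bar>\<mu>\<bar> \<le> \<bar>l1\<bar> \<and> \<bar>\<mu>\<bar> \<le> \<bar>l2\<bar>"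
    and k2: "\<forall>i<n. k i < 2"
    and opt: "\<forall>k' X'. (\<forall>i<n. k' i < 2) \<longrightarrow> kmeans_cost n u1 u2 k X \<le> (1 + \<epsilon>) * kmeans_cost n u1 u2 k' X'"
    and ztdef: "\<forall>i<n. zt i = (if k i = 0 then 1 else -1)"
    and eps: "\<epsilon> > 0"
    and small: "\<eta> \<le> (s - d) * real n / 40"
  shows "misclass_loss n zt z \<le> 10000 * (2 + \<epsilon>) * (\<eta> / ((s - d) * real n))\<^sup>2"
proof -
  define \<theta> where "\<theta> = \<eta> / ((s - d) * real n)"
  have gn: "(s - d) * real n > 0" using gpos npos by simp
  have th0: "0 \<le> \<theta>" unfolding \<theta>_def using eta_nonneg gn by simp
  have th1: "\<theta> \<le> 1/40" unfolding \<theta>_def using small gn by (simp add: field_simps)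
  have w1: "(s - d) * real n / 6 - \<eta> \<le> \<bar>l1\<bar>"
    by (rule weyl[OF u11 u12 e1 e2]) (use top in blast)
  have u21: "vinner n u2 u1 = 0" by (subst vinner_comm) (rule u12)
  have w2: "(s - d) * real n / 6 - \<eta> \<le> \<bar>l2\<bar>"
    by (rule weyl[OF u22 u21 e2 e1]) (use top in blast)
  have lb1: "(s - d) * real n / 8 \<le> \<bar>l1\<bar>" using w1 small gn by linarith
  have lb2: "(s - d) * real n / 8 \<le> \<bar>l2\<bar>" using w2 small gn by linarith
  define r1 where "r1 = (\<lambda>i. u1 i - cmean u1 i)"
  define r2 where "r2 = (\<lambda>i. u2 i - cmean u2 i)"
  have rb1: "vnorm n r1 \<le> 8 * \<theta>" unfolding r1_def \<theta>_def by (rule resid_bound[OF u11 e1 lb1])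
  have rb2: "vnorm n r2 \<le> 8 * \<theta>" unfolding r2_def \<theta>_def by (rule resid_bound[OF u22 e2 lb2])
  define A1 where "A1 = sum u1 Cp / n1r"
  define A2 where "A2 = sum u2 Cp / n1r"
  define B1 where "B1 = sum u1 Cm / n2r"
  define B2 where "B2 = sum u2 Cm / n2r"
  define D2 where "D2 = (A1 - B1)\<^sup>2 + (A2 - B2)\<^sup>2"
  have sep: "9/25 \<le> n1r * D2"
    unfolding D2_def A1_def A2_def B1_def B2_def
    by (rule separation[OF u11 u22 u12]) (use rb1 rb2 th1 in \<open>simp add: r1_def r2_def\<close>)
  have D2pos: "D2 > 0"
  proof (rule ccontr)
    assume "\<not> D2 > 0"
    moreover have "D2 \<ge> 0" unfolding D2_def by simp
    ultimately have "D2 = 0" by simp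
    then show False using sep by simp
  qed
  define \<delta> where "\<delta> = vinner n r1 r1 + vinner n r2 r2"
  have \<delta>0: "0 \<le> \<delta>" unfolding \<delta>_def using vinner_self_nonneg by (simp add: add_nonneg_nonneg)
  have \<delta>b: "\<delta> \<le> 128 * \<theta>\<^sup>2"
  proof -
    have "(vnorm n r1)\<^sup>2 \<le> (8 * \<theta>)\<^sup>2" using rb1 vnorm_nonneg by (intro power_mono) auto
    moreover have "(vnorm n r2)\<^sup>2 \<le> (8 * \<theta>)\<^sup>2" using rb2 vnorm_nonneg by (intro power_mono) auto
    ultimately show ?thesis unfolding \<delta>_def vnorm_sq by (simp add: power2_eq_square)
  qed
  have cm1: "cmean u1 i = (if z i = 1 then A1 else B1)" for i unfolding cmean_def A1_def B1_def by simp
  have cm2: "cmean u2 i = (if z i = 1 then A2 else B2)" for i unfolding cmean_def A2_def B2_def by simp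
  define ks where "ks = (\<lambda>i. if z i = 1 then 0 else (1::nat))"
  define Xs where "Xs = (\<lambda>(a::nat) (b::nat). if a = 0 then (if b = 0 then A1 else A2) else (if b = 0 then B1 else B2))"
  have cs: "kmeans_cost n u1 u2 ks Xs = \<delta>"
  proof -
    have "kmeans_cost n u1 u2 ks Xs = (\<Sum>i<n. r1 i * r1 i + r2 i * r2 i)"
      unfolding kmeans_cost_def
    proof (intro sum.cong refl)
      fix i
      show "(Xs (ks i) 0 - u1 i)\<^sup>2 + (Xs (ks i) 1 - u2 i)\<^sup>2 = r1 i * r1 i + r2 i * r2 i"
        unfolding r1_def r2_def cm1 cm2 Xs_def ks_def by (simp add: power2_eq_square algebra_simps)
    qed
    then show ?thesis unfolding \<delta>_def vinner_def by (simp add: sum.distrib)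
  qed
  have ck: "kmeans_cost n u1 u2 k X \<le> (1 + \<epsilon>) * \<delta>"
  proof -
    have "\<forall>i<n. ks i < 2" by (simp add: ks_def)
    then have "kmeans_cost n u1 u2 k X \<le> (1 + \<epsilon>) * kmeans_cost n u1 u2 ks Xs" using opt by blast
    then show ?thesis using cs by simp
  qed
  define S where "S = 2 * kmeans_cost n u1 u2 k X + 2 * \<delta>"
  have tot: "(\<Sum>i<n. (X (k i) 0 - (if z i = 1 then A1 else B1))\<^sup>2 + (X (k i) 1 - (if z i = 1 then A2 else B2))\<^sup>2) \<le> S"
  proof -
    have "(\<Sum>i<n. (X (k i) 0 - (if z i = 1 then A1 else B1))\<^sup>2 + (X (k i) 1 - (if z i = 1 then A2 else B2))\<^sup>2)
       \<le> (\<Sum>i<n. 2 * ((X (k i) 0 - u1 i)\<^sup>2 + (X (k i) 1 - u2 i)\<^sup>2) + 2 * (r1 i * r1 i + r2 i * r2 i))"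
    proof (intro sum_mono)
      fix i
      have a: "(X (k i) 0 - cmean u1 i)\<^sup>2 \<le> 2 * (u1 i - X (k i) 0)\<^sup>2 + 2 * (u1 i - cmean u1 i)\<^sup>2" by (rule sq_tri)
      have b: "(X (k i) 1 - cmean u2 i)\<^sup>2 \<le> 2 * (u2 i - X (k i) 1)\<^sup>2 + 2 * (u2 i - cmean u2 i)\<^sup>2" by (rule sq_tri)
      have c: "(u1 i - X (k i) 0)\<^sup>2 = (X (k i) 0 - u1 i)\<^sup>2" "(u2 i - X (k i) 1)\<^sup>2 = (X (k i) 1 - u2 i)\<^sup>2"
        by (simp_all add: power2_commute)
      show "(X (k i) 0 - (if z i = 1 then A1 else B1))\<^sup>2 + (X (k i) 1 - (if z i = 1 then A2 else B2))\<^sup>2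
         \<le> 2 * ((X (k i) 0 - u1 i)\<^sup>2 + (X (k i) 1 - u2 i)\<^sup>2) + 2 * (r1 i * r1 i + r2 i * r2 i)"
        using a b c unfolding cm1 cm2 r1_def r2_def by (simp add: power2_eq_square)
    qed
    also have "\<dots> = S" unfolding S_def kmeans_cost_def \<delta>_def vinner_def
      by (simp add: sum.distrib sum_distrib_left)
    finally show ?thesis .
  qed
  have cnt: "real (min (hamming n zt z) (hamming n (\<lambda>i. - zt i) z)) \<le> 3 * (4 * S / D2)"
    unfolding D2_def by (rule counting[OF k2 ztdef _ tot]) (use D2pos in \<open>simp add: D2_def\<close>)
  have S0: "0 \<le> S" unfolding S_def using \<delta>0 kmeans_cost_def
    by (simp add: kmeans_cost_def add_nonneg_nonneg sum_nonneg)
  have Sb: "S \<le> 2 * (2 + \<epsilon>) * \<delta>" unfolding S_def using ck by (simp add: algebra_simps)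
  have nn1: "n1r \<le> real n" using n12 n2r_pos by linarith
  have Dn: "9/25 \<le> D2 * real n"
  proof -
    have "n1r * D2 \<le> real n * D2" using nn1 D2pos by (intro mult_right_mono) auto
    then show ?thesis using sep by (simp add: mult.commute)
  qed
  have "misclass_loss n zt z = real (min (hamming n zt z) (hamming n (\<lambda>i. - zt i) z)) / real n"
    unfolding misclass_loss_def by simp
  also have "\<dots> \<le> (12 * S / D2) / real n" using cnt npos by (intro divide_right_mono) auto
  also have "\<dots> = 12 * S / (D2 * real n)" by simp
  also have "\<dots> \<le> 12 * S / (9/25)" using Dn S0 by (intro divide_left_mono) auto
  also have "\<dots> \<le> 12 * (2 * (2 + \<epsilon>) * (128 * \<theta>\<^sup>2)) / (9/25)"
  proof -
    have "2 * (2 + \<epsilon>) * \<delta> \<le> 2 * (2 + \<epsilon>) * (128 * \<theta>\<^sup>2)" using \<delta>b eps by (intro mult_left_mono) auto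
    then show ?thesis using Sb by (simp add: field_simps)
  qed
  also have "\<dots> \<le> 10000 * (2 + \<epsilon>) * \<theta>\<^sup>2" using eps by (simp add: field_simps)
  finally show ?thesis unfolding \<theta>_def .
qed

end

lemma exp_bern: assumes "0 \<le> r" "r \<le> 1"
  shows "measure_pmf.expectation (bernoulli_pmf r) (\<lambda>e. if e then 1 else (0::real)) = r"
  using assms by simp

lemma edge_exp:
  assumes r: "0 \<le> \<rho>" "\<rho> \<le> 1" and p: "0 \<le> p" "p \<le> 1" and q: "0 \<le> q" "q \<le> 1"
    and zi: "zi = 1 \<or> zi = -1" and zj: "zj = 1 \<or> zj = -1"
  shows "measure_pmf.expectation (edge_pmf \<rho> p q zi zj) (\<lambda>e. if e then 1 else (0::real)) =
     (if zi = zj then (1 - 2 * \<rho> * (1 - \<rho>)) * p + 2 * \<rho> * (1 - \<rho>) * q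
      else 2 * \<rho> * (1 - \<rho>) * p + (1 - 2 * \<rho> * (1 - \<rho>)) * q)"
proof -
  define g where "g = (\<lambda>b::bool. if b then -1 else (1::int))"
  define h where "h = (\<lambda>(a, b). bernoulli_pmf (if zi * a = zj * b then p else q))"
  have "edge_pmf \<rho> p q zi zj = bind_pmf (pair_pmf (map_pmf g (bernoulli_pmf \<rho>)) (map_pmf g (bernoulli_pmf \<rho>))) h"
    unfolding edge_pmf_def flip_pmf_def g_def h_def ..
  also have "\<dots> = bind_pmf (pair_pmf (bernoulli_pmf \<rho>) (bernoulli_pmf \<rho>)) (\<lambda>x. h ((\<lambda>(a, b). (g a, g b)) x))"
    by (simp add: map_pair[symmetric] bind_map_pmf)
  finally have eq: "edge_pmf \<rho> p q zi zj = \<dots>" .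
  have "measure_pmf.expectation (edge_pmf \<rho> p q zi zj) (\<lambda>e. if e then 1 else (0::real)) =
     (\<Sum>a\<in>UNIV. pmf (pair_pmf (bernoulli_pmf \<rho>) (bernoulli_pmf \<rho>)) a *\<^sub>R
        measure_pmf.expectation (h ((\<lambda>(a, b). (g a, g b)) a)) (\<lambda>e. if e then 1 else (0::real)))"
    unfolding eq by (rule pmf_expectation_bind) auto
  also have "\<dots> = (\<Sum>a\<in>UNIV. pmf (pair_pmf (bernoulli_pmf \<rho>) (bernoulli_pmf \<rho>)) a *
        (if zi * g (fst a) = zj * g (snd a) then p else q))"
    by (intro sum.cong refl) (auto simp: h_def exp_bern p q split: prod.splits)
  also have "\<dots> = (if zi = zj then (1 - 2 * \<rho> * (1 - \<rho>)) * p + 2 * \<rho> * (1 - \<rho>) * q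
      else 2 * \<rho> * (1 - \<rho>) * p + (1 - 2 * \<rho> * (1 - \<rho>)) * q)"
    using zi zj r unfolding UNIV_Times_UNIV[symmetric] UNIV_bool
    by (auto simp: pmf_pair g_def algebra_simps)
  finally show ?thesis .
qed

lemma trim_sym: "sym_mat n M \<Longrightarrow> sym_mat n (trim n L \<omega> p \<gamma> M)"
  unfolding sym_mat_def trim_def by auto

lemma Abar_sym: "(\<forall>l<L. adjacency n (A l)) \<Longrightarrow> sym_mat n (Abar L \<omega> A)"
  unfolding sym_mat_def Abar_def adjacency_def by (auto intro!: sum.cong)

lemma mat_vec_diff: "mat_vec n (\<lambda>i j. M i j - N i j) x i = mat_vec n M x i - mat_vec n N x i"
  unfolding mat_vec_def by (simp add: algebra_simps sum_subtractf)

lemma main_single: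
  fixes n L :: nat and \<rho> \<beta> c \<gamma> \<epsilon> :: real and \<omega> p q :: "nat \<Rightarrow> real" and z zt :: "nat \<Rightarrow> int"
    and A :: "nat \<Rightarrow> nat \<Rightarrow> nat \<Rightarrow> real"
  defines "pb \<equiv> (\<Sum>l<L. \<omega> l * p l)" and "qb \<equiv> (\<Sum>l<L. \<omega> l * q l)"
  assumes c0: "0 \<le> c" and c1: "c < 1"
    and hL: "L \<ge> 1" and r0: "0 \<le> \<rho>" and r1: "\<rho> < 1/2" and b1: "\<beta> \<ge> 1"
    and hpq: "\<forall>l<L. \<omega> l > 0 \<and> 0 < q l \<and> q l < p l \<and> p l < 1"
    and cond: "\<beta> > 1 \<longrightarrow> pb / (pb - qb) \<le> c * (2 * (1 - 2*\<rho>)\<^sup>2 / (\<beta> - 1/\<beta>)) + 2 * (\<rho> - \<rho>\<^sup>2)"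
    and zpm: "\<forall>i<n. z i = 1 \<or> z i = -1"
    and cp1: "real n / (2*\<beta>) \<le> real (card {i. i < n \<and> z i = 1})"
    and cm1: "real n / (2*\<beta>) \<le> real (card {i. i < n \<and> z i = -1})"
    and adj: "\<forall>l<L. adjacency n (A l)"
    and eps: "\<epsilon> > 0"
    and alg: "alg1_output n L A \<omega> p \<gamma> \<epsilon> zt"
  shows "misclass_loss n zt z \<le>
       10000 * ((2 + \<epsilon>) / (real n ^ 2 * (1 - 2*\<rho>) ^ 4)) *
       ((spec_norm n (\<lambda>i j. trim n L \<omega> p \<gamma> (Abar L \<omega> A) i j - expected_Abar L \<omega> p q \<rho> z i j)
          + (pb - 2 * \<rho> * (1 - \<rho>) * (pb - qb)))\<^sup>2 / (pb - qb)\<^sup>2)"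
proof (cases "n = 0")
  case True
  then show ?thesis by (simp add: misclass_loss_def)
next
  case False
  then have npos: "1 \<le> n" by simp
  define T where "T = trim n L \<omega> p \<gamma> (Abar L \<omega> A)"
  define E where "E = expected_Abar L \<omega> p q \<rho> z"
  define G where "G = pb - qb"
  define \<kappa> where "\<kappa> = 2 * \<rho> * (1 - \<rho>)"
  define s where "s = pb - \<kappa> * G"
  define d where "d = qb + \<kappa> * G"
  define \<eta> where "\<eta> = spec_norm n (\<lambda>i j. T i j - E i j) + s"
  have Lne: "{..<L} \<noteq> {}" using hL lessThan_empty_iff by (metis not_one_le_zero)
  have qb0: "qb > 0" unfolding qb_def using hpq Lne by (intro sum_pos) auto
  have G0: "G > 0"
  proof -
    have "G = (\<Sum>l<L. \<omega> l * p l - \<omega> l * q l)" unfolding G_def pb_def qb_def by (simp add: sum_subtractf)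
    also have "\<dots> > 0" using hpq Lne by (intro sum_pos) (auto simp: algebra_simps)
    finally show ?thesis .
  qed
  have k0: "0 \<le> \<kappa>" unfolding \<kappa>_def using r0 r1 by simp
  have d0: "0 \<le> d" unfolding d_def using qb0 k0 G0 by simp
  have sd: "s - d = (1 - 2*\<rho>)\<^sup>2 * G" unfolding s_def d_def \<kappa>_def G_def by (simp add: power2_eq_square algebra_simps)
  have K0: "(1 - 2*\<rho>)\<^sup>2 > 0" using r1 by simp
  have "(1 - 2*\<rho>)\<^sup>2 * G > 0" using K0 G0 by (rule mult_pos_pos)
  then have gpos: "d < s" using sd by linarith
  have s0: "s > 0" using gpos d0 by simp
  have b3: "\<beta> \<le> 3"
  proof (rule ccontr)
    assume "\<not> \<beta> \<le> 3"
    then have bb: "\<beta> > 3" by simp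
    define K where "K = (1 - 2*\<rho>)\<^sup>2"
    have "pb / G = s / G + \<kappa>" unfolding s_def using G0 by (simp add: field_simps)
    moreover have "\<kappa> = 2 * (\<rho> - \<rho>\<^sup>2)" unfolding \<kappa>_def by (simp add: power2_eq_square algebra_simps)
    ultimately have "s / G \<le> c * (2 * K / (\<beta> - 1/\<beta>))" using cond bb unfolding G_def K_def by simp
    moreover have "K \<le> s / G" using sd d0 G0 unfolding K_def by (simp add: field_simps)
    moreover have bge: "\<beta> - 1/\<beta> \<ge> 8/3"
    proof -
      have "1/\<beta> \<le> 1/3" using bb by (simp add: field_simps)
      then show ?thesis using bb by linarith
    qed
    then have h1: "2 * K / (\<beta> - 1/\<beta>) \<le> 2 * K / (8/3)" using K0 unfolding K_def by (intro divide_left_mono) auto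
    have h2: "0 \<le> 2 * K / (\<beta> - 1/\<beta>)" using K0 bge unfolding K_def by (intro divide_nonneg_pos) auto
    have "c * (2 * K / (\<beta> - 1/\<beta>)) \<le> 1 * (2 * K / (8/3))"
      using c0 c1 h1 h2 by (intro mult_mono) auto
    ultimately have "K \<le> 3 * K / 4" by simp
    then show False using K0 unfolding K_def by simp
  qed
  have bpos: "\<beta> > 0" using b1 by simp
  have n1: "real n \<le> 6 * real (card {i. i < n \<and> z i = 1})"
  proof -
    have "real n \<le> 2 * \<beta> * real (card {i. i < n \<and> z i = 1})" using cp1 bpos by (simp add: field_simps)
    also have "\<dots> \<le> 6 * real (card {i. i < n \<and> z i = 1})" using b3 by (intro mult_right_mono) auto
    finally show ?thesis .
  qed
  have n2: "real n \<le> 6 * real (card {i. i < n \<and> z i = -1})"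
  proof -
    have "real n \<le> 2 * \<beta> * real (card {i. i < n \<and> z i = -1})" using cm1 bpos by (simp add: field_simps)
    also have "\<dots> \<le> 6 * real (card {i. i < n \<and> z i = -1})" using b3 by (intro mult_right_mono) auto
    finally show ?thesis .
  qed
  have symT: "sym_mat n T" unfolding T_def by (intro trim_sym Abar_sym adj)
  have Eij: "E i j = (if z i = z j then s else d) - (if i = j then s else 0)" if "i < n" "j < n" for i j
  proof (cases "i = j")
    case True then show ?thesis unfolding E_def expected_Abar_def by simp
  next
    case False
    have zi: "z i = 1 \<or> z i = -1" and zj: "z j = 1 \<or> z j = -1" using zpm that by auto
    have "E i j = (\<Sum>l<L. \<omega> l * (if z i = z j then (1 - \<kappa>) * p l + \<kappa> * q l else \<kappa> * p l + (1 - \<kappa>) * q l))"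
      unfolding E_def expected_Abar_def using False
    proof (intro sum.cong refl)
      fix l assume l: "l \<in> {..<L}"
      have pl: "0 \<le> p l" "p l \<le> 1" and ql: "0 \<le> q l" "q l \<le> 1" using hpq l by (auto intro: less_imp_le)
      show "\<omega> l * (if i = j then 0 else measure_pmf.expectation (edge_pmf \<rho> (p l) (q l) (z i) (z j)) (\<lambda>e. if e then 1 else 0))
          = \<omega> l * (if z i = z j then (1 - \<kappa>) * p l + \<kappa> * q l else \<kappa> * p l + (1 - \<kappa>) * q l)"
        using False edge_exp[of \<rho> "p l" "q l" "z i" "z j"] r0 r1 pl ql zi zj unfolding \<kappa>_def by simp
    qed
    also have "\<dots> = (if z i = z j then s else d)"
      unfolding s_def d_def G_def pb_def qb_def
      by (auto simp: sum_distrib_left algebra_simps sum.distrib sum_subtractf)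
    finally show ?thesis using False by simp
  qed
  define P where "P = (\<lambda>i j. if z i = z j then s else d)"
  have Evec: "mat_vec n E x i = mat_vec n P x i - s * x i" if "i < n" for x i
  proof -
    have "mat_vec n E x i = (\<Sum>j<n. P i j * x j - (if i = j then s * x j else 0))"
      unfolding mat_vec_def using that by (intro sum.cong refl) (auto simp: Eij P_def)
    also have "\<dots> = mat_vec n P x i - s * x i" unfolding mat_vec_def using that
      by (simp add: sum_subtractf)
    finally show ?thesis .
  qed
  have noise: "vnorm n (\<lambda>i. mat_vec n T x i - mat_vec n (\<lambda>i j. if z i = z j then s else d) x i) \<le> \<eta> * vnorm n x" for x
  proof -
    define M where "M = (\<lambda>i j. T i j - E i j)"
    have "vnorm n (\<lambda>i. mat_vec n T x i - mat_vec n (\<lambda>i j. if z i = z j then s else d) x i)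
        = vnorm n (\<lambda>i. mat_vec n M x i - s * x i)"
      by (rule vnorm_cong) (simp add: M_def mat_vec_diff Evec P_def)
    also have "\<dots> \<le> vnorm n (mat_vec n M x) + vnorm n (\<lambda>i. s * x i)" by (rule vnorm_diff_triangle)
    also have "\<dots> \<le> spec_norm n M * vnorm n x + s * vnorm n x"
      using spec_norm_bound[of n M x] s0 by (simp add: vnorm_scale)
    also have "\<dots> = \<eta> * vnorm n x" unfolding \<eta>_def M_def by (simp add: algebra_simps)
    finally show ?thesis .
  qed
  interpret comm n T z s d \<eta>
    using symT zpm n1 n2 npos d0 gpos noise by unfold_locales auto
  obtain u1 u2 k X where top2: "top2_eigvecs n T u1 u2" and k2: "\<forall>i<n. k i < 2"
    and opt: "\<forall>k' X'. (\<forall>i<n. k' i < 2) \<longrightarrow> kmeans_cost n u1 u2 k X \<le> (1 + \<epsilon>) * kmeans_cost n u1 u2 k' X'"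
    and ztdef: "\<forall>i<n. zt i = (if k i = 0 then 1 else -1)"
    using alg unfolding alg1_output_def T_def by blast
  obtain l1 l2 where u11: "vinner n u1 u1 = 1" and u22: "vinner n u2 u2 = 1" and u12: "vinner n u1 u2 = 0"
    and e1: "\<forall>i<n. mat_vec n T u1 i = l1 * u1 i" and e2: "\<forall>i<n. mat_vec n T u2 i = l2 * u2 i"
    and top: "\<forall>v \<mu>. (\<exists>i<n. v i \<noteq> 0) \<and> (\<forall>i<n. mat_vec n T v i = \<mu> * v i) \<and>
               vinner n v u1 = 0 \<and> vinner n v u2 = 0 \<longrightarrow> \<bar>\<mu>\<bar> \<le> \<bar>l1\<bar> \<and> \<bar>\<mu>\<bar> \<le> \<bar>l2\<bar>"
    using top2 unfolding top2_eigvecs_def by blast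
  define \<theta> where "\<theta> = \<eta> / ((s - d) * real n)"
  have gn: "(s - d) * real n > 0" using gpos npos by simp
  have bound: "misclass_loss n zt z \<le> 10000 * (2 + \<epsilon>) * \<theta>\<^sup>2"
  proof (cases "\<eta> \<le> (s - d) * real n / 40")
    case True
    show ?thesis unfolding \<theta>_def by (rule core[OF u11 u22 u12 e1 e2 top k2 opt ztdef eps True])
  next
    case False
    then have "1/40 < \<theta>" unfolding \<theta>_def using gn by (simp add: field_simps)
    then have "(1/40)\<^sup>2 \<le> \<theta>\<^sup>2" by (intro power_mono) auto
    then have "10000 * 2 * (1/40)\<^sup>2 \<le> 10000 * (2 + \<epsilon>) * \<theta>\<^sup>2"
      using eps by (intro mult_mono) auto
    moreover have "misclass_loss n zt z \<le> 1/2"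
      by (rule loss_half) (use zpm ztdef in auto)
    moreover have "(10000::real) * 2 * (1/40)\<^sup>2 = 25/2" by (simp add: power2_eq_square)
    ultimately show ?thesis by linarith
  qed
  have "10000 * (2 + \<epsilon>) * \<theta>\<^sup>2 =
       10000 * ((2 + \<epsilon>) / (real n ^ 2 * (1 - 2*\<rho>) ^ 4)) * (\<eta>\<^sup>2 / G\<^sup>2)"
  proof -
    have "\<theta> = \<eta> / ((1 - 2*\<rho>)\<^sup>2 * G * real n)" unfolding \<theta>_def sd ..
    then have "\<theta>\<^sup>2 = \<eta>\<^sup>2 / ((1 - 2*\<rho>) ^ 4 * G\<^sup>2 * (real n)\<^sup>2)"
      by (simp add: power_divide power_mult_distrib flip: power_mult)
    then have "10000 * (2 + \<epsilon>) * \<theta>\<^sup>2 = 10000 * ((2 + \<epsilon>) * \<eta>\<^sup>2 / ((1 - 2*\<rho>) ^ 4 * G\<^sup>2 * (real n)\<^sup>2))"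
      by simp
    also have "(1 - 2*\<rho>) ^ 4 * G\<^sup>2 * (real n)\<^sup>2 = (real n ^ 2 * (1 - 2*\<rho>) ^ 4) * G\<^sup>2"
      by (simp add: algebra_simps)
    also have "(2 + \<epsilon>) * \<eta>\<^sup>2 / ((real n ^ 2 * (1 - 2*\<rho>) ^ 4) * G\<^sup>2) = ((2 + \<epsilon>) / (real n ^ 2 * (1 - 2*\<rho>) ^ 4)) * (\<eta>\<^sup>2 / G\<^sup>2)"
      by (rule times_divide_times_eq[symmetric])
    finally show ?thesis by (simp only: mult.assoc)
  qed
  moreover have "\<eta> = spec_norm n (\<lambda>i j. trim n L \<omega> p \<gamma> (Abar L \<omega> A) i j - expected_Abar L \<omega> p q \<rho> z i j)
          + (pb - 2 * \<rho> * (1 - \<rho>) * (pb - qb))"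
    unfolding \<eta>_def T_def E_def s_def \<kappa>_def G_def by simp
  ultimately show ?thesis using bound unfolding G_def by simp
qed

theorem mainTheorem8:
  fixes c :: real
  assumes "0 \<le> c" and "c < 1"
  shows "\<exists>C::real. \<forall>(n::nat) (L::nat) (\<rho>::real) (\<beta>::real) (\<omega>::nat \<Rightarrow> real)
      (p::nat \<Rightarrow> real) (q::nat \<Rightarrow> real) (z::nat \<Rightarrow> int) (A::nat \<Rightarrow> nat \<Rightarrow> nat \<Rightarrow> real)
      (\<gamma>::real) (\<epsilon>::real) (zt::nat \<Rightarrow> int).
    (let pb = (\<Sum>l<L. \<omega> l * p l); qb = (\<Sum>l<L. \<omega> l * q l) in
     L \<ge> 1 \<and> 0 \<le> \<rho> \<and> \<rho> < 1/2 \<and> \<beta> \<ge> 1 \<and>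
     (\<forall>l<L. \<omega> l > 0 \<and> 0 < q l \<and> q l < p l \<and> p l < 1) \<and>
     (\<beta> > 1 \<longrightarrow> pb / (pb - qb) \<le> c * (2 * (1 - 2*\<rho>)\<^sup>2 / (\<beta> - 1/\<beta>)) + 2 * (\<rho> - \<rho>\<^sup>2)) \<and>
     (\<forall>i<n. z i = 1 \<or> z i = -1) \<and>
     real n / (2*\<beta>) \<le> real (card {i. i < n \<and> z i = 1}) \<and>
     real (card {i. i < n \<and> z i = 1}) \<le> real n * \<beta> / 2 \<and>
     real n / (2*\<beta>) \<le> real (card {i. i < n \<and> z i = -1}) \<and>
     real (card {i. i < n \<and> z i = -1}) \<le> real n * \<beta> / 2 \<and>
     (\<forall>l<L. adjacency n (A l)) \<and>
     \<gamma> > 1 \<and> \<epsilon> > 0 \<and>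
     alg1_output n L A \<omega> p \<gamma> \<epsilon> zt
     \<longrightarrow>
     misclass_loss n zt z \<le>
       C * ((2 + \<epsilon>) / (real n ^ 2 * (1 - 2*\<rho>) ^ 4)) *
       ((spec_norm n (\<lambda>i j. trim n L \<omega> p \<gamma> (Abar L \<omega> A) i j - expected_Abar L \<omega> p q \<rho> z i j)
          + (pb - 2 * \<rho> * (1 - \<rho>) * (pb - qb)))\<^sup>2 / (pb - qb)\<^sup>2))"
  using assms
  apply (intro exI[of _ "10000::real"] allI)
  apply (unfold Let_def)
  apply (intro impI)
  apply (elim conjE)
  apply (rule main_single)
                 apply assumption+
  done

end
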